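(* Let $\mathcal{H}\in\mathbb{R}_D^{[n_1,\ldots,n_m]}$. If $\operatorname{hrank}(\mathcal{H})\le3$, then $\operatorname{hrank}(\mathcal{H})=\operatorname{hrank}_{\mathbb{R}}(\mathcal{H})$. Furthermore, if $\operatorname{hrank}_{\mathbb{R}}(\mathcal{H})\le 4$, then $\operatorname{hrank}(\mathcal{H})=\operatorname{hrank}_{\mathbb{R}}(\mathcal{H})$.
   Context: For $v_i$ vectors, $[v_1,\ldots,v_m]_{\otimes h}:=v_1\otimes\cdots\otimes v_m\otimes\overline{v_1}\otimes\cdots\otimes\overline{v_m}$. A Hermitian tensor is $\mathcal{H}\in\mathbb{C}^{n_1\times\cdots\times n_m\times n_1\times\cdots\times n_m}$ with $\mathcal{H}_{i_1\ldots i_m j_1\ldots j_m}=\overline{\mathcal{H}_{j_1\ldots j_m i_1\ldots i_m}}$; $\operatorname{hrank}(\mathcal{H})$ is the smallest $r$ with $\mathcal{H}=\sum_{i=1}^r\lambda_i[u_i^1,\ldots,u_i^m]_{\otimes h}$, $\lambda_i\in\mathbb{R}$, $u_i^j\in\mathbb{C}^{n_j}$. $\mathbb{R}_D^{[n_1,\ldots,n_m]}$ is the set of real Hermitian tensors admitting such a decomposition with all $u_i^j$ real ($u_i^j\in\mathbb{R}^{n_j}$); for these, $\operatorname{hrank}_{\mathbb{R}}(\mathcal{H})$ is the smallest length of such a real decomposition. *)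

theory Defs
  imports Complex_Main
begin

text \<open>A tensor in
C^{n_1 x ... x n_m x n_1 x ... x n_m} is a function H taking two multi-indices
(i_1..i_m) and (j_1..j_m), each a list; only valid multi-indices matter.
Index positions are 0-based.\<close>

definition valid_idx :: "nat list \<Rightarrow> nat list \<Rightarrow> bool" where
  "valid_idx ns is \<longleftrightarrow> length is = length ns \<and> (\<forall>k<length ns. is ! k < ns ! k)"

definition hermitian_tensor :: "nat list \<Rightarrow> (nat list \<Rightarrow> nat list \<Rightarrow> complex) \<Rightarrow> bool" where
  "hermitian_tensor ns H \<longleftrightarrow>
     (\<forall>is js. valid_idx ns is \<and> valid_idx ns js \<longrightarrow> H is js = cnj (H js is))"

text \<open>Entry (is,js) of [u^1,...,u^m]_{(x)h} = u^1 (x)...(x) u^m (x) conj u^1 (x) ... (x) conj u^m.\<close>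
definition hrank1 :: "nat list \<Rightarrow> (nat \<Rightarrow> nat \<Rightarrow> complex) \<Rightarrow> nat list \<Rightarrow> nat list \<Rightarrow> complex" where
  "hrank1 ns v is js = (\<Prod>k<length ns. v k (is ! k)) * (\<Prod>k<length ns. cnj (v k (js ! k)))"

text \<open>H = sum_{i<r} lam_i [u_i^1,...,u_i^m]_{(x)h}; u i k is the vector u_i^{k+1}.\<close>
definition hdecomp :: "nat list \<Rightarrow> (nat list \<Rightarrow> nat list \<Rightarrow> complex) \<Rightarrow> nat
     \<Rightarrow> (nat \<Rightarrow> real) \<Rightarrow> (nat \<Rightarrow> nat \<Rightarrow> nat \<Rightarrow> complex) \<Rightarrow> bool" where
  "hdecomp ns H r lam u \<longleftrightarrow>
     (\<forall>is js. valid_idx ns is \<and> valid_idx ns js \<longrightarrow>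
        H is js = (\<Sum>i<r. complex_of_real (lam i) * hrank1 ns (u i) is js))"

definition real_vectors :: "(nat \<Rightarrow> nat \<Rightarrow> nat \<Rightarrow> complex) \<Rightarrow> bool" where
  "real_vectors u \<longleftrightarrow> (\<forall>i k j. u i k j \<in> \<real>)"

definition hrank :: "nat list \<Rightarrow> (nat list \<Rightarrow> nat list \<Rightarrow> complex) \<Rightarrow> nat" where
  "hrank ns H = (LEAST r. \<exists>lam u. hdecomp ns H r lam u)"

definition hrank_real :: "nat list \<Rightarrow> (nat list \<Rightarrow> nat list \<Rightarrow> complex) \<Rightarrow> nat" where
  "hrank_real ns H = (LEAST r. \<exists>lam u. real_vectors u \<and> hdecomp ns H r lam u)"

definition RD :: "nat list \<Rightarrow> (nat list \<Rightarrow> nat list \<Rightarrow> complex) set" where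
  "RD ns = {H. hermitian_tensor ns H
              \<and> (\<forall>is js. valid_idx ns is \<and> valid_idx ns js \<longrightarrow> H is js \<in> \<real>)
              \<and> (\<exists>r lam u. real_vectors u \<and> hdecomp ns H r lam u)}"

end

theory Submission
  imports Defs
begin



definition ptens :: "nat list \<Rightarrow> (nat \<Rightarrow> nat \<Rightarrow> nat \<Rightarrow> complex) \<Rightarrow> nat list \<Rightarrow> nat list \<Rightarrow> complex" where
  "ptens ns F is js = (\<Prod>l<length ns. F l (is!l) (js!l))"

definition Aof :: "(nat \<Rightarrow> complex) \<Rightarrow> nat \<Rightarrow> nat \<Rightarrow> complex" where
  "Aof a p q = a p * cnj (a q)"

lemma hrank1_ptens: "hrank1 ns v = ptens ns (\<lambda>l. Aof (v l))"
  by (simp add: hrank1_def ptens_def Aof_def prod.distrib fun_eq_iff)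

lemma ptens_split: "k < length ns \<Longrightarrow>
  ptens ns F is js = F k (is!k) (js!k) * (\<Prod>l\<in>{..<length ns}-{k}. F l (is!l) (js!l))"
  unfolding ptens_def by (simp add: prod.remove)

lemma ptens_fupd: "k < length ns \<Longrightarrow>
  ptens ns (F(k:=G)) is js = G (is!k) (js!k) * (\<Prod>l\<in>{..<length ns}-{k}. F l (is!l) (js!l))"
  by (subst ptens_split[of k]) auto

lemma ptens_upd_idx:
  assumes "k < length ns" "length is = length ns" "length js = length ns"
  shows "ptens ns F (is[k:=p]) (js[k:=q]) = F k p q * (\<Prod>l\<in>{..<length ns}-{k}. F l (is!l) (js!l))"
  using assms by (subst ptens_split[of k]) (auto intro!: prod.cong)

lemma valid_upd: "valid_idx ns is \<Longrightarrow> k < length ns \<Longrightarrow> p < ns!k \<Longrightarrow> valid_idx ns (is[k:=p])"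
  unfolding valid_idx_def by (auto simp: nth_list_update)

lemma valid_len: "valid_idx ns is \<Longrightarrow> length is = length ns"
  unfolding valid_idx_def by auto

lemma ptens_scale:
  assumes "\<And>l p q. l < length ns \<Longrightarrow> p < ns!l \<Longrightarrow> q < ns!l \<Longrightarrow> F l p q = \<gamma> l * G l p q"
    and "valid_idx ns is" "valid_idx ns js"
  shows "ptens ns F is js = (\<Prod>l<length ns. \<gamma> l) * ptens ns G is js"
  using assms unfolding ptens_def valid_idx_def by (auto simp add: prod.distrib[symmetric] intro!: prod.cong)

lemma ptens_lin:
  assumes "k < length ns"
  shows "ptens ns (F(k := (\<lambda>p q. \<Sum>i\<in>I. c i * G i p q))) is js = (\<Sum>i\<in>I. c i * ptens ns (F(k := G i)) is js)"
  using assms by (simp add: ptens_fupd sum_distrib_right mult.assoc)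

lemma ptens_zero:
  assumes "\<forall>is js. valid_idx ns is \<and> valid_idx ns js \<longrightarrow> ptens ns F is js = 0"
  shows "\<exists>l<length ns. \<forall>p<ns!l. \<forall>q<ns!l. F l p q = 0"
proof (rule ccontr)
  assume "\<not> ?thesis"
  then have "\<forall>l. \<exists>pq. l < length ns \<longrightarrow> fst pq < ns!l \<and> snd pq < ns!l \<and> F l (fst pq) (snd pq) \<noteq> 0"
    by force
  then obtain P where P: "\<And>l. l < length ns \<Longrightarrow> fst (P l) < ns!l \<and> snd (P l) < ns!l \<and> F l (fst (P l)) (snd (P l)) \<noteq> 0"
    by metis
  define I0 where "I0 = map (\<lambda>l. fst (P l)) [0..<length ns]"
  define J0 where "J0 = map (\<lambda>l. snd (P l)) [0..<length ns]"
  have v: "valid_idx ns I0" "valid_idx ns J0" unfolding I0_def J0_def valid_idx_def using P by auto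
  have "ptens ns F I0 J0 \<noteq> 0" unfolding ptens_def I0_def J0_def using P by (simp add: prod_zero_iff)
  with assms v show False by auto
qed




definition nzm :: "nat \<Rightarrow> (nat \<Rightarrow> nat \<Rightarrow> complex) \<Rightarrow> bool" where
  "nzm n M \<longleftrightarrow> (\<exists>p<n. \<exists>q<n. M p q \<noteq> 0)"

definition prm :: "nat \<Rightarrow> (nat \<Rightarrow> nat \<Rightarrow> complex) \<Rightarrow> (nat \<Rightarrow> nat \<Rightarrow> complex) \<Rightarrow> bool" where
  "prm n G F \<longleftrightarrow> (\<exists>\<gamma>. \<forall>p<n. \<forall>q<n. G p q = \<gamma> * F p q)"

lemma base_choice:
  assumes "\<forall>l<length ns. nzm (ns!l) (F l)"
  shows "\<exists>I0 J0. valid_idx ns I0 \<and> valid_idx ns J0 \<and> (\<forall>l<length ns. F l (I0!l) (J0!l) \<noteq> 0)"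
proof -
  have "\<forall>l. \<exists>pq. l < length ns \<longrightarrow> fst pq < ns!l \<and> snd pq < ns!l \<and> F l (fst pq) (snd pq) \<noteq> 0"
    using assms unfolding nzm_def by force
  then obtain P where P: "\<And>l. l < length ns \<Longrightarrow> fst (P l) < ns!l \<and> snd (P l) < ns!l \<and> F l (fst (P l)) (snd (P l)) \<noteq> 0"
    by metis
  define I0 where "I0 = map (\<lambda>l. fst (P l)) [0..<length ns]"
  define J0 where "J0 = map (\<lambda>l. snd (P l)) [0..<length ns]"
  have "valid_idx ns I0" "valid_idx ns J0" unfolding I0_def J0_def valid_idx_def using P by auto
  moreover have "\<forall>l<length ns. F l (I0!l) (J0!l) \<noteq> 0" unfolding I0_def J0_def using P by auto
  ultimately show ?thesis by blast
qed

lemma ptens_nonzero_at: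
  assumes "\<forall>l<length ns. F l (I0!l) (J0!l) \<noteq> 0"
  shows "ptens ns F I0 J0 \<noteq> 0"
  using assms unfolding ptens_def by (simp add: prod_zero_iff)

lemma ptens_mode_zero:
  assumes "l < length ns" "\<forall>p<ns!l. \<forall>q<ns!l. F l p q = 0" "valid_idx ns is" "valid_idx ns js"
  shows "ptens ns F is js = 0"
  using assms by (subst ptens_split[of l]) (auto simp: valid_idx_def)

lemma nzm_iff: "nzm n M \<longleftrightarrow> \<not> (\<forall>p<n. \<forall>q<n. M p q = 0)"
  unfolding nzm_def by auto

lemma prop2:
  assumes rel: "\<forall>is js. valid_idx ns is \<and> valid_idx ns js \<longrightarrow> c * ptens ns F is js + d * ptens ns G is js = 0"
    and c: "c \<noteq> 0" and nF: "\<forall>l<length ns. nzm (ns!l) (F l)"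
  shows "\<forall>l<length ns. prm (ns!l) (G l) (F l)" and "d \<noteq> 0" and "\<forall>l<length ns. nzm (ns!l) (G l)"
proof -
  obtain I1 J1 where b1: "valid_idx ns I1" "valid_idx ns J1" "ptens ns F I1 J1 \<noteq> 0"
    using base_choice[OF nF] ptens_nonzero_at by blast
  show nG: "\<forall>l<length ns. nzm (ns!l) (G l)"
  proof (intro allI impI)
    fix l assume l: "l < length ns"
    show "nzm (ns!l) (G l)"
    proof (rule ccontr)
      assume "\<not> nzm (ns!l) (G l)"
      then have "ptens ns G I1 J1 = 0" using ptens_mode_zero[OF l _ b1(1,2)] unfolding nzm_iff by blast
      moreover have "c * ptens ns F I1 J1 + d * ptens ns G I1 J1 = 0" using rel b1 by blast
      ultimately show False using b1 c by simp
    qed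
  qed
  show "d \<noteq> 0"
  proof
    assume "d = 0"
    moreover have "c * ptens ns F I1 J1 + d * ptens ns G I1 J1 = 0" using rel b1 by blast
    ultimately show False using b1 c by simp
  qed
  then have d: "d \<noteq> 0" .
  obtain I0 J0 where b0: "valid_idx ns I0" "valid_idx ns J0" "\<forall>l<length ns. G l (I0!l) (J0!l) \<noteq> 0"
    using base_choice[OF nG] by blast
  show "\<forall>l<length ns. prm (ns!l) (G l) (F l)"
  proof (intro allI impI)
    fix l assume l: "l < length ns"
    define PF where "PF = (\<Prod>l'\<in>{..<length ns}-{l}. F l' (I0!l') (J0!l'))"
    define PG where "PG = (\<Prod>l'\<in>{..<length ns}-{l}. G l' (I0!l') (J0!l'))"
    have PG: "PG \<noteq> 0" unfolding PG_def using b0(3) by (simp add: prod_zero_iff)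
    have len: "length I0 = length ns" "length J0 = length ns" using b0 by (auto simp: valid_idx_def)
    show "prm (ns!l) (G l) (F l)" unfolding prm_def
    proof (intro exI allI impI)
      fix p q assume pq: "p < ns!l" "q < ns!l"
      have "c * ptens ns F (I0[l:=p]) (J0[l:=q]) + d * ptens ns G (I0[l:=p]) (J0[l:=q]) = 0"
        using rel valid_upd[OF b0(1) l pq(1)] valid_upd[OF b0(2) l pq(2)] by blast
      then have "c * (F l p q * PF) + d * (G l p q * PG) = 0"
        unfolding PF_def PG_def using ptens_upd_idx[OF l len] by simp
      then show "G l p q = (- (c * PF) / (d * PG)) * F l p q"
        using d PG by (simp add: field_simps) (metis add.commute add_eq_0_iff mult.commute mult.left_commute)
    qed
  qed
qed

lemma prm_trans_inv:
  assumes "nzm n G" "prm n G F1" "prm n G F0"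
  shows "prm n F1 F0"
proof -
  obtain a where a: "\<forall>p<n. \<forall>q<n. G p q = a * F1 p q" using assms(2) unfolding prm_def by blast
  obtain b where b: "\<forall>p<n. \<forall>q<n. G p q = b * F0 p q" using assms(3) unfolding prm_def by blast
  have "a \<noteq> 0" using assms(1) a unfolding nzm_def by auto
  then show ?thesis unfolding prm_def using a b
    by (intro exI[of _ "b / a"]) (auto simp: field_simps)
qed

lemma prm_sym:
  assumes "nzm n G" "prm n G F"
  shows "prm n F G"
proof -
  have "prm n G G" unfolding prm_def by (intro exI[of _ 1]) auto
  then show ?thesis using prm_trans_inv[OF assms(1) assms(2)] by auto
qed

lemma ptens_const_mode:
  assumes "l < length ns" "valid_idx ns is" "valid_idx ns js" "p < ns!l" "q < ns!l" "p0 < ns!l" "q0 < ns!l"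
  shows "ptens ns (F(l := (\<lambda>_ _. \<alpha> * F l p q - \<beta> * F l p0 q0))) is js
       = \<alpha> * ptens ns F (is[l:=p]) (js[l:=q]) - \<beta> * ptens ns F (is[l:=p0]) (js[l:=q0])"
  using assms by (simp add: ptens_fupd ptens_upd_idx valid_len algebra_simps)

lemma kill:
  assumes rel: "\<forall>is js. valid_idx ns is \<and> valid_idx ns js \<longrightarrow>
        c0 * ptens ns F0 is js + c1 * ptens ns F1 is js + c2 * ptens ns F2 is js = 0"
    and c1: "c1 \<noteq> 0" and l: "l < length ns" and n0: "nzm (ns!l) (F0 l)"
    and np: "\<not> prm (ns!l) (F1 l) (F0 l)" and n1: "\<forall>l<length ns. nzm (ns!l) (F1 l)"
  shows "\<forall>l'<length ns. l' \<noteq> l \<longrightarrow> prm (ns!l') (F2 l') (F1 l')"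
proof -
  obtain p0 q0 where pq0: "p0 < ns!l" "q0 < ns!l" "F0 l p0 q0 \<noteq> 0" using n0 unfolding nzm_def by blast
  obtain p q where pq: "p < ns!l" "q < ns!l" "F1 l p q \<noteq> (F1 l p0 q0 / F0 l p0 q0) * F0 l p q"
    using np unfolding prm_def by blast
  define \<alpha> where "\<alpha> = F0 l p0 q0"
  define \<beta> where "\<beta> = F0 l p q"
  define G where "G = (\<lambda>F::nat\<Rightarrow>nat\<Rightarrow>nat\<Rightarrow>complex. F(l := (\<lambda>_ _. \<alpha> * F l p q - \<beta> * F l p0 q0)))"
  have G0: "\<alpha> * F0 l p q - \<beta> * F0 l p0 q0 = 0" unfolding \<alpha>_def \<beta>_def by simp
  have G1: "\<alpha> * F1 l p q - \<beta> * F1 l p0 q0 \<noteq> 0"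
    using pq(3) pq0(3) unfolding \<alpha>_def \<beta>_def by (auto simp: field_simps)
  have rel2: "\<forall>is js. valid_idx ns is \<and> valid_idx ns js \<longrightarrow>
        c1 * ptens ns (G F1) is js + c2 * ptens ns (G F2) is js = 0"
  proof (intro allI impI)
    fix "is" js assume v: "valid_idx ns is \<and> valid_idx ns js"
    have e: "\<And>F. ptens ns (G F) is js = \<alpha> * ptens ns F (is[l:=p]) (js[l:=q]) - \<beta> * ptens ns F (is[l:=p0]) (js[l:=q0])"
      unfolding G_def using ptens_const_mode[OF l _ _ pq(1,2) pq0(1,2)] v by blast
    have z0: "ptens ns (G F0) is js = 0"
      unfolding G_def using G0 l v by (simp add: ptens_fupd)
    have r1: "c0 * ptens ns F0 (is[l:=p]) (js[l:=q]) + c1 * ptens ns F1 (is[l:=p]) (js[l:=q]) + c2 * ptens ns F2 (is[l:=p]) (js[l:=q]) = 0"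
      using rel valid_upd[of ns "is" l p] valid_upd[of ns js l q] v l pq by blast
    have r2: "c0 * ptens ns F0 (is[l:=p0]) (js[l:=q0]) + c1 * ptens ns F1 (is[l:=p0]) (js[l:=q0]) + c2 * ptens ns F2 (is[l:=p0]) (js[l:=q0]) = 0"
      using rel valid_upd[of ns "is" l p0] valid_upd[of ns js l q0] v l pq0 by blast
    have "c0 * ptens ns (G F0) is js + c1 * ptens ns (G F1) is js + c2 * ptens ns (G F2) is js
        = \<alpha> * (c0 * ptens ns F0 (is[l:=p]) (js[l:=q]) + c1 * ptens ns F1 (is[l:=p]) (js[l:=q]) + c2 * ptens ns F2 (is[l:=p]) (js[l:=q]))
        - \<beta> * (c0 * ptens ns F0 (is[l:=p0]) (js[l:=q0]) + c1 * ptens ns F1 (is[l:=p0]) (js[l:=q0]) + c2 * ptens ns F2 (is[l:=p0]) (js[l:=q0]))"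
      unfolding e by (simp add: algebra_simps)
    also have "\<dots> = 0" using r1 r2 by simp
    finally show "c1 * ptens ns (G F1) is js + c2 * ptens ns (G F2) is js = 0" using z0 by simp
  qed
  have nG1: "\<forall>l'<length ns. nzm (ns!l') (G F1 l')"
    using n1 G1 pq(1) unfolding G_def nzm_def by auto
  have "\<forall>l'<length ns. prm (ns!l') (G F2 l') (G F1 l')" using prop2(1)[OF rel2 c1 nG1] .
  then show ?thesis unfolding G_def by auto
qed

lemma prop3:
  assumes rel: "\<forall>is js. valid_idx ns is \<and> valid_idx ns js \<longrightarrow>
        c0 * ptens ns F0 is js + c1 * ptens ns F1 is js + c2 * ptens ns F2 is js = 0"
    and c: "c0 \<noteq> 0" "c1 \<noteq> 0" "c2 \<noteq> 0"
    and n0: "\<forall>l<length ns. nzm (ns!l) (F0 l)" and n1: "\<forall>l<length ns. nzm (ns!l) (F1 l)"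
    and n2: "\<forall>l<length ns. nzm (ns!l) (F2 l)"
  shows "\<exists>k0. \<forall>l<length ns. l \<noteq> k0 \<longrightarrow> prm (ns!l) (F1 l) (F0 l) \<and> prm (ns!l) (F2 l) (F0 l)"
proof (cases "\<forall>l<length ns. prm (ns!l) (F1 l) (F0 l)")
  case True
  then have "\<forall>l. \<exists>g. l < length ns \<longrightarrow> (\<forall>p<ns!l. \<forall>q<ns!l. F1 l p q = g * F0 l p q)"
    unfolding prm_def by metis
  then obtain \<gamma> where \<gamma>: "\<And>l p q. l < length ns \<Longrightarrow> p < ns!l \<Longrightarrow> q < ns!l \<Longrightarrow> F1 l p q = \<gamma> l * F0 l p q"
    by metis
  have rel': "\<forall>is js. valid_idx ns is \<and> valid_idx ns js \<longrightarrow>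
        c2 * ptens ns F2 is js + (c0 + c1 * (\<Prod>l<length ns. \<gamma> l)) * ptens ns F0 is js = 0"
  proof (intro allI impI)
    fix "is" js assume v: "valid_idx ns is \<and> valid_idx ns js"
    have e: "ptens ns F1 is js = (\<Prod>l<length ns. \<gamma> l) * ptens ns F0 is js"
      using ptens_scale[of ns F1 \<gamma> F0] \<gamma> v by blast
    have "c0 * ptens ns F0 is js + c1 * ptens ns F1 is js + c2 * ptens ns F2 is js = 0" using rel v by blast
    then show "c2 * ptens ns F2 is js + (c0 + c1 * (\<Prod>l<length ns. \<gamma> l)) * ptens ns F0 is js = 0"
      unfolding e by (simp add: algebra_simps)
  qed
  have "c0 + c1 * (\<Prod>l<length ns. \<gamma> l) \<noteq> 0" using prop2(2)[OF rel' c(3) n2] .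
  moreover have rel'': "\<forall>is js. valid_idx ns is \<and> valid_idx ns js \<longrightarrow>
        (c0 + c1 * (\<Prod>l<length ns. \<gamma> l)) * ptens ns F0 is js + c2 * ptens ns F2 is js = 0"
    using rel' by (simp add: add.commute)
  ultimately have "\<forall>l<length ns. prm (ns!l) (F2 l) (F0 l)" using prop2(1)[OF rel'' _ n0] by blast
  then show ?thesis using True by blast
next
  case False
  then obtain l where l: "l < length ns" "\<not> prm (ns!l) (F1 l) (F0 l)" by blast
  have a: "\<forall>l'<length ns. l' \<noteq> l \<longrightarrow> prm (ns!l') (F2 l') (F1 l')"
    using kill[OF rel c(2) l(1) _ l(2) n1] n0 l(1) by blast
  have np: "\<not> prm (ns!l) (F0 l) (F1 l)"
    using prm_sym[of "ns!l" "F0 l" "F1 l"] n0 l by blast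
  have rel2: "\<forall>is js. valid_idx ns is \<and> valid_idx ns js \<longrightarrow>
        c1 * ptens ns F1 is js + c0 * ptens ns F0 is js + c2 * ptens ns F2 is js = 0"
    using rel by (simp add: add.commute add.left_commute)
  have b: "\<forall>l'<length ns. l' \<noteq> l \<longrightarrow> prm (ns!l') (F2 l') (F0 l')"
    using kill[OF rel2 c(1) l(1) _ np n0] n1 l(1) by blast
  have "\<forall>l'<length ns. l' \<noteq> l \<longrightarrow> prm (ns!l') (F1 l') (F0 l')"
    using a b n2 prm_trans_inv by blast
  then show ?thesis using b by blast
qed




definition Nof :: "(nat \<Rightarrow> complex) \<Rightarrow> nat \<Rightarrow> nat \<Rightarrow> complex" where
  "Nof a p q = Aof a p q - Aof a q p"

definition nzv :: "nat \<Rightarrow> (nat \<Rightarrow> complex) \<Rightarrow> bool" where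
  "nzv n a \<longleftrightarrow> (\<exists>p<n. a p \<noteq> 0)"

lemma Aof_herm: "Aof a q p = cnj (Aof a p q)"
  unfolding Aof_def by simp

lemma Aof_diag_real: "Aof a p p = of_real ((cmod (a p))^2)"
  unfolding Aof_def by (metis complex_norm_square of_real_power)

lemma nzm_Aof: "nzm n (Aof a) \<longleftrightarrow> nzv n a"
  unfolding nzm_def nzv_def Aof_def by auto

lemma Aof_scale: "(\<And>p. p < n \<Longrightarrow> b p = \<beta> * a p) \<Longrightarrow> p < n \<Longrightarrow> q < n \<Longrightarrow>
   Aof b p q = of_real ((cmod \<beta>)^2) * Aof a p q"
proof -
  assume b: "\<And>p. p < n \<Longrightarrow> b p = \<beta> * a p" and pq: "p < n" "q < n"
  have "b p * cnj (b q) = (\<beta> * cnj \<beta>) * (a p * cnj (a q))" using b pq by simp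
  then show ?thesis unfolding Aof_def complex_norm_square by simp
qed

lemma Nof_scale: "(\<And>p. p < n \<Longrightarrow> b p = \<beta> * a p) \<Longrightarrow> p < n \<Longrightarrow> q < n \<Longrightarrow>
   Nof b p q = of_real ((cmod \<beta>)^2) * Nof a p q"
  unfolding Nof_def using Aof_scale[of n b \<beta> a] by (simp add: algebra_simps)

lemma prm_vec:
  assumes "prm n (Aof b) (Aof a)" "nzv n a"
  shows "\<exists>\<beta>. \<forall>p<n. b p = \<beta> * a p"
proof -
  obtain \<gamma> where g: "\<forall>p<n. \<forall>q<n. b p * cnj (b q) = \<gamma> * (a p * cnj (a q))"
    using assms(1) unfolding prm_def Aof_def by blast
  obtain q0 where q0: "q0 < n" "a q0 \<noteq> 0" using assms(2) unfolding nzv_def by blast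
  show ?thesis
  proof (cases "b q0 = 0")
    case True
    then have "\<gamma> * (a q0 * cnj (a q0)) = 0" using g q0 by (metis mult_zero_left mult_zero_right complex_cnj_zero)
    then have "\<gamma> = 0" using q0 by simp
    then have "\<forall>p<n. b p = 0" using g by (metis mult_eq_0_iff mult_zero_left complex_cnj_zero_iff)
    then show ?thesis by (intro exI[of _ 0]) auto
  next
    case False
    show ?thesis
    proof (intro exI[of _ "\<gamma> * cnj (a q0) / cnj (b q0)"] allI impI)
      fix p assume "p < n"
      then have "b p * cnj (b q0) = \<gamma> * (a p * cnj (a q0))" using g q0 by blast
      then show "b p = \<gamma> * cnj (a q0) / cnj (b q0) * a p" using False
        by (simp add: field_simps)
    qed
  qed
qed

lemma realph:
  assumes "\<forall>p<n. \<forall>q<n. Nof a p q = 0"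
  shows "\<exists>v. (\<forall>p. v p \<in> \<real>) \<and> (\<forall>p<n. \<forall>q<n. Aof v p q = Aof a p q)"
proof (cases "\<exists>p0<n. a p0 \<noteq> 0")
  case False
  then show ?thesis by (intro exI[of _ "\<lambda>_. 0"]) (auto simp: Aof_def)
next
  case True
  then obtain p0 where p0: "p0 < n" "a p0 \<noteq> 0" by blast
  define z where "z = cnj (a p0) / of_real (cmod (a p0))"
  have zz: "z * cnj z = 1"
  proof -
    have "z * cnj z = (a p0 * cnj (a p0)) / (of_real (cmod (a p0)))^2" unfolding z_def
      by (simp add: power2_eq_square field_simps)
    also have "\<dots> = 1" unfolding complex_norm_square[symmetric] using p0 by simp
    finally show ?thesis .
  qed
  have r: "a p * z \<in> \<real>" if "p < n" for p
  proof -
    have "Aof a p p0 = Aof a p0 p" using assms that p0 unfolding Nof_def by auto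
    then have e: "a p * cnj (a p0) = a p0 * cnj (a p)" unfolding Aof_def by simp
    have c: "cnj (a p * cnj (a p0)) = a p0 * cnj (a p)" by (simp add: mult.commute)
    have "a p * cnj (a p0) = cnj (a p * cnj (a p0))" using e c by simp
    then have "a p * cnj (a p0) \<in> \<real>" using Reals_cnj_iff by metis
    then have "a p * cnj (a p0) / of_real (cmod (a p0)) \<in> \<real>" by (simp add: Reals_divide)
    then show ?thesis unfolding z_def by simp
  qed
  define v where "v = (\<lambda>p. complex_of_real (Re (a p * z)))"
  have v: "p < n \<Longrightarrow> v p = a p * z" for p unfolding v_def using r of_real_Re by blast
  show ?thesis
  proof (intro exI[of _ v] conjI allI impI)
    fix p show "v p \<in> \<real>" unfolding v_def by simp
  next
    fix p q assume "p < n" "q < n"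
    then have "Aof v p q = a p * cnj (a q) * (z * cnj z)" unfolding Aof_def using v by (simp add: algebra_simps)
    then show "Aof v p q = Aof a p q" using zz unfolding Aof_def by simp
  qed
qed

definition SI :: "nat list \<Rightarrow> (nat list \<Rightarrow> nat list \<Rightarrow> complex) \<Rightarrow> bool" where
  "SI ns H \<longleftrightarrow> (\<forall>k<length ns. \<forall>is js. valid_idx ns is \<and> valid_idx ns js \<longrightarrow>
      H is js = H (is[k:=js!k]) (js[k:=is!k]))"

lemma ptens_swapdiff:
  assumes "k < length ns" "valid_idx ns is" "valid_idx ns js"
  shows "ptens ns F is js - ptens ns F (is[k:=js!k]) (js[k:=is!k]) = ptens ns (F(k := (\<lambda>p q. F k p q - F k q p))) is js"
  using assms by (simp add: ptens_upd_idx valid_len ptens_fupd ptens_split[of k] algebra_simps)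

lemma swap_valid:
  assumes "k < length ns" "valid_idx ns is" "valid_idx ns js"
  shows "valid_idx ns (is[k:=js!k])" "valid_idx ns (js[k:=is!k])"
  using assms by (auto simp: valid_idx_def nth_list_update)

lemma hdecomp_D:
  assumes "hdecomp ns H r lam u" "SI ns H" "k < length ns" "valid_idx ns is" "valid_idx ns js"
  shows "(\<Sum>i<r. complex_of_real (lam i) * ptens ns ((\<lambda>l. Aof (u i l))(k := Nof (u i k))) is js) = 0"
proof -
  have "H is js = H (is[k:=js!k]) (js[k:=is!k])" using assms(2,3,4,5) unfolding SI_def by blast
  moreover have "H is js = (\<Sum>i<r. complex_of_real (lam i) * ptens ns (\<lambda>l. Aof (u i l)) is js)"
    using assms(1,4,5) unfolding hdecomp_def hrank1_ptens by blast
  moreover have "H (is[k:=js!k]) (js[k:=is!k]) = (\<Sum>i<r. complex_of_real (lam i) * ptens ns (\<lambda>l. Aof (u i l)) (is[k:=js!k]) (js[k:=is!k]))"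
    using assms(1) swap_valid[OF assms(3,4,5)] unfolding hdecomp_def hrank1_ptens by blast
  ultimately have "(\<Sum>i<r. complex_of_real (lam i) * (ptens ns (\<lambda>l. Aof (u i l)) is js - ptens ns (\<lambda>l. Aof (u i l)) (is[k:=js!k]) (js[k:=is!k]))) = 0"
    by (simp add: sum_subtractf right_diff_distrib)
  then show ?thesis using ptens_swapdiff[OF assms(3,4,5)] unfolding Nof_def by simp
qed

lemma ptens_SI_mode:
  assumes "\<forall>p<ns!k. \<forall>q<ns!k. F k p q = F k q p" "k < length ns" "valid_idx ns is" "valid_idx ns js"
  shows "ptens ns F is js = ptens ns F (is[k:=js!k]) (js[k:=is!k])"
proof -
  have "ptens ns F is js - ptens ns F (is[k:=js!k]) (js[k:=is!k]) = 0"
    unfolding ptens_swapdiff[OF assms(2,3,4)]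
    using assms by (intro ptens_mode_zero[of k]) auto
  then show ?thesis by simp
qed

lemma SI_diff: "SI ns H \<Longrightarrow> SI ns G \<Longrightarrow> SI ns (\<lambda>is js. H is js - G is js)"
  unfolding SI_def by auto

lemma SI_add: "SI ns H \<Longrightarrow> SI ns G \<Longrightarrow> SI ns (\<lambda>is js. H is js + G is js)"
  unfolding SI_def by auto

lemma SI_scale: "SI ns H \<Longrightarrow> SI ns (\<lambda>is js. c * H is js)"
  unfolding SI_def by auto

lemma SI_hrank1:
  assumes "\<forall>l<length ns. \<forall>p<ns!l. \<forall>q<ns!l. Nof (v l) p q = 0"
  shows "SI ns (hrank1 ns v)"
  unfolding SI_def hrank1_ptens
proof (intro allI impI)
  fix k "is" js assume "k < length ns" "valid_idx ns is \<and> valid_idx ns js"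
  then show "ptens ns (\<lambda>l. Aof (v l)) is js = ptens ns (\<lambda>l. Aof (v l)) (is[k := js ! k]) (js[k := is ! k])"
    using assms by (intro ptens_SI_mode) (auto simp: Nof_def)
qed

lemma Nof_real: "(\<forall>p. v p \<in> \<real>) \<Longrightarrow> Nof v p q = 0"
  unfolding Nof_def Aof_def by (metis Reals_cnj_iff mult.commute diff_self)

lemma sum_split_add: "(\<Sum>i<a+b. f i) = (\<Sum>i<a. f i) + (\<Sum>i<b. f (a+i))" for f :: "nat \<Rightarrow> 'a::comm_monoid_add"
  by (induction b) (auto simp: add.assoc)

definition RR :: "nat list \<Rightarrow> (nat list \<Rightarrow> nat list \<Rightarrow> complex) \<Rightarrow> nat \<Rightarrow> bool" where
  "RR ns H r \<longleftrightarrow> (\<exists>lam u. real_vectors u \<and> hdecomp ns H r lam u)"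

lemma hrank1_cong:
  assumes "\<forall>l<length ns. \<forall>p<ns!l. u l p = v l p" "valid_idx ns is" "valid_idx ns js"
  shows "hrank1 ns u is js = hrank1 ns v is js"
  using assms unfolding hrank1_def valid_idx_def by (auto intro!: prod.cong arg_cong2[where f="(*)"])

lemma realify:
  assumes "hdecomp ns H r lam u" "\<forall>i<r. \<forall>l<length ns. \<forall>p<ns!l. u i l p \<in> \<real>"
  shows "RR ns H r"
proof -
  define u' where "u' = (\<lambda>i l p. complex_of_real (Re (u i l p)))"
  have "real_vectors u'" unfolding real_vectors_def u'_def by auto
  moreover have "hdecomp ns H r lam u'"
    unfolding hdecomp_def
  proof (intro allI impI)
    fix "is" js assume v: "valid_idx ns is \<and> valid_idx ns js"
    have "\<forall>i<r. hrank1 ns (u i) is js = hrank1 ns (u' i) is js"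
      using assms(2) v by (auto intro!: hrank1_cong simp: u'_def complex_is_Real_iff)
    then show "H is js = (\<Sum>i<r. complex_of_real (lam i) * hrank1 ns (u' i) is js)"
      using assms(1) v unfolding hdecomp_def by auto
  qed
  ultimately show ?thesis unfolding RR_def by blast
qed

lemma RR_mono:
  assumes "RR ns H r" "r \<le> s"
  shows "RR ns H s"
proof -
  obtain lam u where u: "real_vectors u" "hdecomp ns H r lam u" using assms(1) unfolding RR_def by blast
  define lam' where "lam' = (\<lambda>i. if i < r then lam i else 0)"
  have s: "s = r + (s - r)" using assms(2) by auto
  have "hdecomp ns H s lam' u" using u(2) unfolding hdecomp_def lam'_def
    by (subst s) (simp add: sum_split_add)
  then show ?thesis using u(1) unfolding RR_def by blast
qed


lemma RR_add:
  assumes "RR ns G a" "RR ns K b"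
  shows "RR ns (\<lambda>is js. G is js + K is js) (a+b)"
proof -
  obtain l1 u1 where u1: "real_vectors u1" "hdecomp ns G a l1 u1" using assms(1) unfolding RR_def by blast
  obtain l2 u2 where u2: "real_vectors u2" "hdecomp ns K b l2 u2" using assms(2) unfolding RR_def by blast
  define l where "l = (\<lambda>i. if i < a then l1 i else l2 (i - a))"
  define u where "u = (\<lambda>i. if i < a then u1 i else u2 (i - a))"
  have "real_vectors u" using u1(1) u2(1) unfolding real_vectors_def u_def by auto
  moreover have "hdecomp ns (\<lambda>is js. G is js + K is js) (a+b) l u"
    using u1(2) u2(2) unfolding hdecomp_def sum_split_add l_def u_def by auto
  ultimately show ?thesis unfolding RR_def by blast
qed

lemma RR_cong:
  assumes "RR ns G r" "\<forall>is js. valid_idx ns is \<and> valid_idx ns js \<longrightarrow> H is js = G is js"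
  shows "RR ns H r"
  using assms unfolding RR_def hdecomp_def by metis

lemma RR_zero:
  assumes "\<forall>is js. valid_idx ns is \<and> valid_idx ns js \<longrightarrow> H is js = 0"
  shows "RR ns H r"
proof -
  have "hdecomp ns H r (\<lambda>_. 0) (\<lambda>_ _ _. 0)" using assms unfolding hdecomp_def by simp
  moreover have "real_vectors (\<lambda>_ _ _. 0)" unfolding real_vectors_def by simp
  ultimately show ?thesis unfolding RR_def by blast
qed

lemma RR_single:
  assumes "\<forall>l<length ns. \<forall>p<ns!l. \<forall>q<ns!l. Nof (v l) p q = 0"
  shows "RR ns (\<lambda>is js. complex_of_real c * hrank1 ns v is js) 1"
proof -
  have "\<forall>l. \<exists>w. l < length ns \<longrightarrow> (\<forall>p. w p \<in> \<real>) \<and> (\<forall>p<ns!l. \<forall>q<ns!l. Aof w p q = Aof (v l) p q)"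
    using realph assms by metis
  then obtain w where w: "\<And>l. l < length ns \<Longrightarrow> (\<forall>p. w l p \<in> \<real>) \<and> (\<forall>p<ns!l. \<forall>q<ns!l. Aof (w l) p q = Aof (v l) p q)"
    by metis
  have "hdecomp ns (\<lambda>is js. complex_of_real c * hrank1 ns v is js) 1 (\<lambda>_. c) (\<lambda>_. w)"
    unfolding hdecomp_def hrank1_ptens
  proof (intro allI impI)
    fix "is" js assume v: "valid_idx ns is \<and> valid_idx ns js"
    have "ptens ns (\<lambda>l. Aof (v l)) is js = ptens ns (\<lambda>l. Aof (w l)) is js"
      unfolding ptens_def using w v by (auto simp: valid_idx_def intro!: prod.cong)
    moreover have "(\<Sum>i<(1::nat). complex_of_real c * ptens ns (\<lambda>l. Aof (w l)) is js) = complex_of_real c * ptens ns (\<lambda>l. Aof (w l)) is js"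
      by simp
    ultimately show "complex_of_real c * ptens ns (\<lambda>l. Aof (v l)) is js = (\<Sum>i<(1::nat). complex_of_real c * ptens ns (\<lambda>l. Aof (w l)) is js)"
      by simp
  qed
  then show ?thesis using realify w by blast
qed




definition skip :: "nat \<Rightarrow> nat \<Rightarrow> nat" where
  "skip j i = (if i < j then i else Suc i)"

lemma sum_skip:
  assumes "j \<le> d"
  shows "(\<Sum>i<Suc d. f i) = f j + (\<Sum>i<d. f (skip j i))"
proof -
  have j: "j \<in> {..<Suc d}" using assms by auto
  have "(\<Sum>i<Suc d. f i) = f j + sum f ({..<Suc d} - {j})"
    using sum.remove[OF _ j] by simp
  moreover have "skip j ` {..<d} = {..<Suc d} - {j}"
  proof
    show "skip j ` {..<d} \<subseteq> {..<Suc d} - {j}" unfolding skip_def by auto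
  next
    show "{..<Suc d} - {j} \<subseteq> skip j ` {..<d}"
    proof
      fix x assume x: "x \<in> {..<Suc d} - {j}"
      show "x \<in> skip j ` {..<d}"
      proof (cases "x < j")
        case True then show ?thesis using x assms unfolding skip_def by (intro image_eqI[of _ _ x]) auto
      next
        case False then have "x > j" using x by auto
        then show ?thesis using x unfolding skip_def by (intro image_eqI[of _ _ "x - 1"]) auto
      qed
    qed
  qed
  moreover have "inj_on (skip j) {..<d}" unfolding inj_on_def skip_def by auto
  ultimately show ?thesis using sum.reindex[of "skip j" "{..<d}" f] by (simp add: comp_def)
qed

lemma matlem:
  fixes d n :: nat and M :: "nat \<Rightarrow> nat \<Rightarrow> complex"
  assumes "\<forall>p<n. \<forall>q<n. M p q \<in> \<real> \<and> M p q = M q p"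
    and "\<forall>q<n. \<exists>x. \<forall>p<n. M p q = (\<Sum>i<d. x i * a i p)"
  shows "\<exists>\<mu> w. (\<forall>j<d. \<forall>p<n. w j p \<in> \<real>) \<and>
     (\<forall>p<n. \<forall>q<n. M p q = (\<Sum>j<d. complex_of_real (\<mu> j) * w j p * cnj (w j q)))"
  using assms
proof (induction d arbitrary: M a)
  case 0
  then show ?case by auto
next
  case (Suc d)
  note MR = Suc.prems(1)
  show ?case
  proof (cases "\<forall>p<n. \<forall>q<n. M p q = 0")
    case True
    then show ?thesis by (intro exI[of _ "\<lambda>_. 0"] exI[of _ "\<lambda>_ _. 0"]) auto
  next
    case False
    have "\<exists>e. (\<forall>t. e t \<in> \<real>) \<and> (\<Sum>p<n. e p * (\<Sum>q<n. M p q * e q)) \<noteq> 0"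
    proof (cases "\<exists>p<n. M p p \<noteq> 0")
      case True
      then obtain p where p: "p < n" "M p p \<noteq> 0" by blast
      define e where "e = (\<lambda>t. if t = p then (1::complex) else 0)"
      have inner: "(\<Sum>q<n. M p' q * e q) = M p' p" for p'
        unfolding e_def using p by (simp add: if_distrib if_distribR sum.delta' cong: if_cong)
      have "(\<Sum>p'<n. e p' * (\<Sum>q<n. M p' q * e q)) = M p p"
        unfolding inner unfolding e_def using p by (simp add: if_distrib if_distribR sum.delta' cong: if_cong)
      then show ?thesis using p by (intro exI[of _ e]) (auto simp: e_def)
    next
      case F2: False
      from False obtain p q where pq: "p < n" "q < n" "M p q \<noteq> 0" by blast
      with F2 have pq': "p \<noteq> q" by auto
      define e1 where "e1 = (\<lambda>t. if t = p then (1::complex) else 0)"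
      define e2 where "e2 = (\<lambda>t. if t = q then (1::complex) else 0)"
      define e where "e = (\<lambda>t. e1 t + e2 t)"
      have i1: "(\<Sum>q'<n. M p' q' * e1 q') = M p' p" for p'
        unfolding e1_def using pq by (simp add: if_distrib if_distribR sum.delta' cong: if_cong)
      have i2: "(\<Sum>q'<n. M p' q' * e2 q') = M p' q" for p'
        unfolding e2_def using pq by (simp add: if_distrib if_distribR sum.delta' cong: if_cong)
      have inner: "(\<Sum>q'<n. M p' q' * e q') = M p' p + M p' q" for p'
        unfolding e_def distrib_left sum.distrib i1 i2 ..
      have o1: "(\<Sum>p'<n. e1 p' * f p') = f p" for f :: "nat \<Rightarrow> complex"
        unfolding e1_def using pq by (simp add: if_distrib if_distribR sum.delta' cong: if_cong)
      have o2: "(\<Sum>p'<n. e2 p' * f p') = f q" for f :: "nat \<Rightarrow> complex"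
        unfolding e2_def using pq by (simp add: if_distrib if_distribR sum.delta' cong: if_cong)
      have "(\<Sum>p'<n. e p' * (\<Sum>q'<n. M p' q' * e q')) = M p p + M p q + M q p + M q q"
        unfolding inner unfolding e_def distrib_right sum.distrib o1 o2 by simp
      also have "\<dots> = 2 * M p q" using F2 pq MR by auto
      finally show ?thesis using pq by (intro exI[of _ e]) (auto simp: e_def e1_def e2_def)
    qed
    then obtain e where e: "\<forall>t. e t \<in> \<real>" and \<sigma>0: "(\<Sum>p<n. e p * (\<Sum>q<n. M p q * e q)) \<noteq> 0" by blast
    define z where "z = (\<lambda>p. \<Sum>q<n. M p q * e q)"
    define \<sigma> where "\<sigma> = (\<Sum>p<n. e p * z p)"
    have \<sigma>0: "\<sigma> \<noteq> 0" using \<sigma>0 unfolding \<sigma>_def z_def .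
    have zR: "p < n \<Longrightarrow> z p \<in> \<real>" for p unfolding z_def using MR e by (auto intro!: sum_in_Reals)
    have \<sigma>R: "\<sigma> \<in> \<real>" unfolding \<sigma>_def using zR e by (auto intro!: sum_in_Reals)
    have ez: "(\<Sum>p<n. e p * M p q) = z q" if "q < n" for q
      unfolding z_def using MR that by (auto intro!: sum.cong simp: mult.commute)
    obtain X where X: "\<And>q p. q < n \<Longrightarrow> p < n \<Longrightarrow> M p q = (\<Sum>i<Suc d. X q i * a i p)"
      using Suc.prems(2) by metis
    define y where "y = (\<lambda>i. \<Sum>q<n. e q * X q i)"
    have zspan: "z p = (\<Sum>i<Suc d. y i * a i p)" if "p < n" for p
    proof -
      have "z p = (\<Sum>q<n. (\<Sum>i<Suc d. X q i * a i p) * e q)"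
        unfolding z_def using X that by (intro sum.cong refl) simp
      also have "\<dots> = (\<Sum>q<n. \<Sum>i<Suc d. X q i * a i p * e q)"
        by (simp only: sum_distrib_right)
      also have "\<dots> = (\<Sum>i<Suc d. \<Sum>q<n. X q i * a i p * e q)"
        by (rule sum.swap)
      also have "\<dots> = (\<Sum>i<Suc d. y i * a i p)"
        unfolding y_def sum_distrib_right by (intro sum.cong refl) (simp add: mult_ac)
      finally show ?thesis .
    qed
    define ea where "ea = (\<lambda>i. \<Sum>p<n. e p * a i p)"
    have spanlin: "(\<Sum>p<n. e p * (\<Sum>i<Suc d. c i * a i p)) = (\<Sum>i<Suc d. c i * ea i)" for c
    proof -
      have "(\<Sum>p<n. e p * (\<Sum>i<Suc d. c i * a i p)) = (\<Sum>p<n. \<Sum>i<Suc d. e p * (c i * a i p))"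
        by (simp only: sum_distrib_left)
      also have "\<dots> = (\<Sum>i<Suc d. \<Sum>p<n. e p * (c i * a i p))" by (rule sum.swap)
      also have "\<dots> = (\<Sum>i<Suc d. c i * ea i)"
        unfolding ea_def sum_distrib_left by (intro sum.cong refl) (simp add: mult_ac)
      finally show ?thesis .
    qed
    have "\<sigma> = (\<Sum>p<n. e p * (\<Sum>i<Suc d. y i * a i p))"
      unfolding \<sigma>_def using zspan by (intro sum.cong refl) simp
    then have "\<sigma> = (\<Sum>i<Suc d. y i * ea i)" using spanlin by simp
    then obtain j where j: "j < Suc d" "ea j \<noteq> 0" using \<sigma>0
      by (metis (no_types, lifting) lessThan_iff mult_zero_right sum.neutral)
    define M' where "M' = (\<lambda>p q. M p q - z p * z q / \<sigma>)"
    define b where "b = (\<lambda>i p. a (skip j i) p - ea (skip j i) / ea j * a j p)"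
    have M'R: "\<forall>p<n. \<forall>q<n. M' p q \<in> \<real> \<and> M' p q = M' q p"
      unfolding M'_def using MR zR \<sigma>R by (auto simp: mult.commute)
    have M'span: "\<forall>q<n. \<exists>x. \<forall>p<n. M' p q = (\<Sum>i<d. x i * b i p)"
    proof (intro allI impI)
      fix q assume q: "q < n"
      define c where "c = (\<lambda>i. X q i - z q * y i / \<sigma>)"
      have M'c: "M' p q = (\<Sum>i<Suc d. c i * a i p)" if "p < n" for p
      proof -
        have "M' p q = (\<Sum>i<Suc d. X q i * a i p) - (\<Sum>i<Suc d. y i * a i p) * (z q / \<sigma>)"
          unfolding M'_def using X[OF q that] zspan[OF that] by simp
        also have "\<dots> = (\<Sum>i<Suc d. X q i * a i p - y i * a i p * (z q / \<sigma>))"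
          by (simp only: sum_distrib_right sum_subtractf)
        also have "\<dots> = (\<Sum>i<Suc d. c i * a i p)"
          unfolding c_def by (intro sum.cong refl) (simp add: algebra_simps)
        finally show ?thesis .
      qed
      have "(\<Sum>p<n. e p * M' p q) = (\<Sum>p<n. e p * M p q - e p * z p * (z q / \<sigma>))"
        unfolding M'_def by (intro sum.cong refl) (simp add: algebra_simps)
      also have "\<dots> = (\<Sum>p<n. e p * M p q) - (\<Sum>p<n. e p * z p) * (z q / \<sigma>)"
        by (simp only: sum_subtractf sum_distrib_right)
      also have "\<dots> = 0" using ez[OF q] \<sigma>0 unfolding \<sigma>_def[symmetric] by simp
      finally have "(\<Sum>p<n. e p * M' p q) = 0" .
      moreover have "(\<Sum>p<n. e p * M' p q) = (\<Sum>i<Suc d. c i * ea i)"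
        using M'c spanlin[of c] by (metis (no_types, lifting) lessThan_iff sum.cong)
      ultimately have ce: "(\<Sum>i<Suc d. c i * ea i) = 0" by simp
      have jd: "j \<le> d" using j by simp
      have cj: "c j * ea j = - (\<Sum>i<d. c (skip j i) * ea (skip j i))"
        using ce sum_skip[OF jd, of "\<lambda>i. c i * ea i"] by (simp add: add_eq_0_iff)
      show "\<exists>x. \<forall>p<n. M' p q = (\<Sum>i<d. x i * b i p)"
      proof (intro exI[of _ "\<lambda>i. c (skip j i)"] allI impI)
        fix p assume p: "p < n"
        have cjv: "c j = - (\<Sum>i<d. c (skip j i) * ea (skip j i)) / ea j" using cj j(2) by (simp add: field_simps)
        have cj': "c j * a j p = - (\<Sum>i<d. c (skip j i) * (ea (skip j i) / ea j * a j p))"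
        proof -
          have "c j * a j p = - ((\<Sum>i<d. c (skip j i) * ea (skip j i)) / ea j * a j p)" unfolding cjv by simp
          also have "\<dots> = - (\<Sum>i<d. c (skip j i) * ea (skip j i) / ea j * a j p)"
            by (simp only: sum_divide_distrib sum_distrib_right)
          also have "\<dots> = - (\<Sum>i<d. c (skip j i) * (ea (skip j i) / ea j * a j p))"
            by (intro arg_cong[where f=uminus] sum.cong refl) simp
          finally show ?thesis .
        qed
        have "M' p q = c j * a j p + (\<Sum>i<d. c (skip j i) * a (skip j i) p)"
          using M'c[OF p] sum_skip[OF jd, of "\<lambda>i. c i * a i p"] by simp
        also have "\<dots> = (\<Sum>i<d. c (skip j i) * a (skip j i) p) - (\<Sum>i<d. c (skip j i) * (ea (skip j i) / ea j * a j p))"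
          unfolding cj' by simp
        also have "\<dots> = (\<Sum>i<d. c (skip j i) * b i p)"
          unfolding b_def by (simp only: sum_subtractf[symmetric] right_diff_distrib)
        finally show "M' p q = (\<Sum>i<d. c (skip j i) * b i p)" .
      qed
    qed
    obtain \<mu> w where IH: "\<forall>j<d. \<forall>p<n. w j p \<in> \<real>"
      "\<forall>p<n. \<forall>q<n. M' p q = (\<Sum>j<d. complex_of_real (\<mu> j) * w j p * cnj (w j q))"
      using Suc.IH[OF M'R M'span] by blast
    define \<mu>' where "\<mu>' = (\<lambda>i. if i < d then \<mu> i else 1 / Re \<sigma>)"
    define w' where "w' = (\<lambda>i. if i < d then w i else z)"
    show ?thesis
    proof (intro exI[of _ \<mu>'] exI[of _ w'] conjI allI impI)
      fix i p assume "i < Suc d" "p < n"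
      then show "w' i p \<in> \<real>" unfolding w'_def using IH(1) zR by auto
    next
      fix p q assume pq: "p < n" "q < n"
      have "M p q = M' p q + z p * z q / \<sigma>" unfolding M'_def by simp
      also have "z p * z q / \<sigma> = complex_of_real (1 / Re \<sigma>) * z p * cnj (z q)"
      proof -
        have "cnj (z q) = z q" using zR[OF pq(2)] Reals_cnj_iff by blast
        moreover have "complex_of_real (Re \<sigma>) = \<sigma>" using \<sigma>R by simp
        ultimately show ?thesis by (metis divide_inverse mult.commute mult.left_commute of_real_inverse inverse_eq_divide)
      qed
      finally have e1: "M p q = M' p q + complex_of_real (1 / Re \<sigma>) * z p * cnj (z q)" .
      have e2: "(\<Sum>j<Suc d. complex_of_real (\<mu>' j) * w' j p * cnj (w' j q))
          = (\<Sum>j<d. complex_of_real (\<mu> j) * w j p * cnj (w j q)) + complex_of_real (1 / Re \<sigma>) * z p * cnj (z q)"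
        unfolding \<mu>'_def w'_def by simp
      show "M p q = (\<Sum>j<Suc d. complex_of_real (\<mu>' j) * w' j p * cnj (w' j q))"
        unfolding e2 e1 using IH(2) pq by simp
    qed
  qed
qed




lemma Aof_cnj: "cnj (Aof a p q) = Aof a q p"
  unfolding Aof_def by simp

lemma ptens_cong:
  assumes "\<forall>l<length ns. \<forall>p<ns!l. \<forall>q<ns!l. F l p q = G l p q" "valid_idx ns is" "valid_idx ns js"
  shows "ptens ns F is js = ptens ns G is js"
  using assms unfolding ptens_def valid_idx_def by (auto intro!: prod.cong)

lemma collapseF:
  assumes k: "k < length ns"
    and pr: "\<forall>i<s. \<forall>l<length ns. l \<noteq> k \<longrightarrow> (\<forall>p<ns!l. \<forall>q<ns!l. F i l p q = \<gamma> i l * F 0 l p q)"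
    and v: "valid_idx ns is" "valid_idx ns js"
  shows "(\<Sum>i<s. c i * ptens ns (F i) is js) =
    ptens ns ((F 0)(k := (\<lambda>p q. \<Sum>i<s. c i * (\<Prod>l\<in>{..<length ns}-{k}. \<gamma> i l) * F i k p q))) is js"
proof -
  have t: "ptens ns (F i) is js = (\<Prod>l\<in>{..<length ns}-{k}. \<gamma> i l) * ptens ns ((F 0)(k := F i k)) is js"
    if i: "i < s" for i
  proof -
    define g where "g = (\<lambda>l. if l = k then 1 else \<gamma> i l)"
    have "ptens ns (F i) is js = (\<Prod>l<length ns. g l) * ptens ns ((F 0)(k := F i k)) is js"
      using pr i by (intro ptens_scale[OF _ v]) (auto simp: g_def)
    moreover have "(\<Prod>l<length ns. g l) = (\<Prod>l\<in>{..<length ns}-{k}. \<gamma> i l)"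
      using k by (simp add: prod.remove[of "{..<length ns}" k] g_def)
    ultimately show ?thesis by simp
  qed
  have "(\<Sum>i<s. c i * ptens ns (F i) is js) =
      (\<Sum>i<s. (c i * (\<Prod>l\<in>{..<length ns}-{k}. \<gamma> i l)) * ptens ns ((F 0)(k := F i k)) is js)"
    using t by (intro sum.cong refl) (simp add: mult.assoc)
  also have "\<dots> = ptens ns ((F 0)(k := (\<lambda>p q. \<Sum>i<s. (c i * (\<Prod>l\<in>{..<length ns}-{k}. \<gamma> i l)) * F i k p q))) is js"
    using ptens_lin[OF k, where F="F 0" and c="\<lambda>i. c i * (\<Prod>l\<in>{..<length ns}-{k}. \<gamma> i l)" and I="{..<s}" and G="\<lambda>i. F i k"] by simp
  finally show ?thesis .
qed

lemma hdecomp_ptens: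
  "hdecomp ns H r lam u \<Longrightarrow> valid_idx ns is \<Longrightarrow> valid_idx ns js \<Longrightarrow>
   H is js = (\<Sum>i<r. complex_of_real (lam i) * ptens ns (\<lambda>l. Aof (u i l)) is js)"
  unfolding hdecomp_def hrank1_ptens by blast

definition cg :: "nat list \<Rightarrow> nat \<Rightarrow> (nat \<Rightarrow> nat \<Rightarrow> complex) \<Rightarrow> nat \<Rightarrow> complex" where
  "cg ns k B i = (\<Prod>l\<in>{..<length ns}-{k}. complex_of_real ((cmod (B i l))^2))"

lemma cg_real: "cg ns k B i \<in> \<real>"
  unfolding cg_def by (auto intro!: prod_in_Reals)

lemma collapse:
  assumes k: "k < length ns" and hd: "hdecomp ns H s lam u"
    and pr: "\<forall>i<s. \<forall>l<length ns. l \<noteq> k \<longrightarrow> (\<forall>p<ns!l. u i l p = B i l * u 0 l p)"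
    and v: "valid_idx ns is" "valid_idx ns js"
  shows "H is js = ptens ns ((\<lambda>l. Aof (u 0 l))(k := (\<lambda>p q. \<Sum>i<s. complex_of_real (lam i) * cg ns k B i * Aof (u i k) p q))) is js"
proof -
  have pr': "\<forall>i<s. \<forall>l<length ns. l \<noteq> k \<longrightarrow> (\<forall>p<ns!l. \<forall>q<ns!l. Aof (u i l) p q = complex_of_real ((cmod (B i l))^2) * Aof (u 0 l) p q)"
  proof (intro allI impI)
    fix i l p q assume a: "i < s" "l < length ns" "l \<noteq> k" "p < ns!l" "q < ns!l"
    then have "\<And>p. p < ns!l \<Longrightarrow> u i l p = B i l * u 0 l p" using pr by blast
    then show "Aof (u i l) p q = complex_of_real ((cmod (B i l))^2) * Aof (u 0 l) p q"
      using Aof_scale[of "ns!l" "u i l" "B i l" "u 0 l" p q] a by blast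
  qed
  have "H is js = (\<Sum>i<s. complex_of_real (lam i) * ptens ns (\<lambda>l. Aof (u i l)) is js)"
    by (rule hdecomp_ptens[OF hd v])
  also have "\<dots> = ptens ns ((\<lambda>l. Aof (u 0 l))(k := (\<lambda>p q. \<Sum>i<s. complex_of_real (lam i) * (\<Prod>l\<in>{..<length ns}-{k}. complex_of_real ((cmod (B i l))^2)) * Aof (u i k) p q))) is js"
    by (rule collapseF[OF k pr' v])
  finally show ?thesis unfolding cg_def .
qed

lemma swap_eq_ptens:
  assumes "SI ns H" "\<forall>is js. valid_idx ns is \<and> valid_idx ns js \<longrightarrow> H is js = ptens ns F is js"
    and "l < length ns" "valid_idx ns is" "valid_idx ns js"
  shows "ptens ns (F(l := (\<lambda>p q. F l p q - F l q p))) is js = 0"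
proof -
  have "H is js = H (is[l:=js!l]) (js[l:=is!l])" using assms(1,3,4,5) unfolding SI_def by blast
  then have "ptens ns F is js - ptens ns F (is[l:=js!l]) (js[l:=is!l]) = 0"
    using assms(2) assms(4,5) swap_valid[OF assms(3,4,5)] by simp
  then show ?thesis using ptens_swapdiff[OF assms(3,4,5)] by simp
qed

lemma choice2: "\<forall>x y. \<exists>z. P x y z \<Longrightarrow> \<exists>f. \<forall>x y. P x y (f x y)"
  by metis

lemma lcommon:
  assumes si: "SI ns H" and hd: "hdecomp ns H s lam u" and k: "k < length ns"
    and pr: "\<forall>i<s. \<forall>l<length ns. l \<noteq> k \<longrightarrow> (\<exists>\<beta>. \<forall>p<ns!l. u i l p = \<beta> * u 0 l p)"
    and nz: "\<forall>l<length ns. l \<noteq> k \<longrightarrow> nzv (ns!l) (u 0 l)"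
  shows "RR ns H s"
proof -
  have "\<forall>i l. \<exists>\<beta>. i < s \<longrightarrow> l < length ns \<longrightarrow> l \<noteq> k \<longrightarrow> (\<forall>p<ns!l. u i l p = \<beta> * u 0 l p)"
    using pr by blast
  from choice2[OF this] obtain B where B0: "\<forall>i l. i < s \<longrightarrow> l < length ns \<longrightarrow> l \<noteq> k \<longrightarrow> (\<forall>p<ns!l. u i l p = B i l * u 0 l p)"
    by blast
  have B: "\<forall>i<s. \<forall>l<length ns. l \<noteq> k \<longrightarrow> (\<forall>p<ns!l. u i l p = B i l * u 0 l p)" using B0 by blast
  define M where "M = (\<lambda>p q. \<Sum>i<s. complex_of_real (lam i) * cg ns k B i * Aof (u i k) p q)"
  define F where "F = (\<lambda>l. Aof (u 0 l))(k := M)"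
  have H: "\<forall>is js. valid_idx ns is \<and> valid_idx ns js \<longrightarrow> H is js = ptens ns F is js"
    using collapse[OF k hd B] unfolding F_def M_def by blast
  have nzF: "\<forall>l<length ns. l \<noteq> k \<longrightarrow> nzm (ns!l) (F l)" using nz unfolding F_def by (simp add: nzm_Aof)
  show ?thesis
  proof (cases "\<exists>l<length ns. l \<noteq> k \<and> \<not> (\<forall>p<ns!l. \<forall>q<ns!l. Nof (u 0 l) p q = 0)")
    case True
    then obtain l where l: "l < length ns" "l \<noteq> k" "\<not> (\<forall>p<ns!l. \<forall>q<ns!l. Nof (u 0 l) p q = 0)" by blast
    have z: "\<forall>is js. valid_idx ns is \<and> valid_idx ns js \<longrightarrow> ptens ns (F(l := (\<lambda>p q. F l p q - F l q p))) is js = 0"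
      using swap_eq_ptens[OF si H l(1)] by blast
    obtain l' where l': "l' < length ns" "\<forall>p<ns!l'. \<forall>q<ns!l'. (F(l := (\<lambda>p q. F l p q - F l q p))) l' p q = 0"
      using ptens_zero[OF z] by blast
    have "l' = k"
    proof (rule ccontr)
      assume "l' \<noteq> k"
      show False
      proof (cases "l' = l")
        case True
        then show False using l' l unfolding F_def Nof_def by auto
      next
        case False
        then show False using l' nzF \<open>l' \<noteq> k\<close> unfolding nzm_def by auto
      qed
    qed
    then have "\<forall>p<ns!k. \<forall>q<ns!k. F k p q = 0" using l' l(2) by auto
    then have "\<forall>is js. valid_idx ns is \<and> valid_idx ns js \<longrightarrow> H is js = 0"
    proof (intro allI impI)
      fix "is" js assume Fk: "\<forall>p<ns!k. \<forall>q<ns!k. F k p q = 0" and v: "valid_idx ns is \<and> valid_idx ns js"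
      have "ptens ns F is js = 0" using ptens_mode_zero[where F=F, OF k Fk] v by blast
      then show "H is js = 0" using H v by simp
    qed
    then show ?thesis by (rule RR_zero)
  next
    case False
    then have "\<forall>l. \<exists>v. l < length ns \<longrightarrow> l \<noteq> k \<longrightarrow> (\<forall>p. v p \<in> \<real>) \<and> (\<forall>p<ns!l. \<forall>q<ns!l. Aof v p q = Aof (u 0 l) p q)"
      using realph by blast
    from choice[OF this] obtain V where V0: "\<forall>l. l < length ns \<longrightarrow> l \<noteq> k \<longrightarrow> (\<forall>p. V l p \<in> \<real>) \<and> (\<forall>p<ns!l. \<forall>q<ns!l. Aof (V l) p q = Aof (u 0 l) p q)"
      by blast
    have V: "\<And>l. l < length ns \<Longrightarrow> l \<noteq> k \<Longrightarrow> (\<forall>p. V l p \<in> \<real>) \<and> (\<forall>p<ns!l. \<forall>q<ns!l. Aof (V l) p q = Aof (u 0 l) p q)"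
      using V0 by blast
    have z: "\<forall>is js. valid_idx ns is \<and> valid_idx ns js \<longrightarrow> ptens ns (F(k := (\<lambda>p q. F k p q - F k q p))) is js = 0"
      using swap_eq_ptens[OF si H k] by blast
    obtain l' where l': "l' < length ns" "\<forall>p<ns!l'. \<forall>q<ns!l'. (F(k := (\<lambda>p q. F k p q - F k q p))) l' p q = 0"
      using ptens_zero[OF z] by blast
    have "l' = k"
    proof (rule ccontr)
      assume "l' \<noteq> k"
      then have "\<forall>p<ns!l'. \<forall>q<ns!l'. F l' p q = 0" using l' by auto
      then show False using nzF l'(1) \<open>l' \<noteq> k\<close> unfolding nzm_def by blast
    qed
    then have Msym: "\<forall>p<ns!k. \<forall>q<ns!k. M q p = M p q" using l' unfolding F_def by auto
    have cgc: "cnj (cg ns k B i) = cg ns k B i" for i using cg_real Reals_cnj_iff by blast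
    have Mherm: "M q p = cnj (M p q)" for p q
      unfolding M_def cnj_sum by (intro sum.cong refl) (simp add: Aof_cnj cgc)
    have MR: "\<forall>p<ns!k. \<forall>q<ns!k. M p q \<in> \<real> \<and> M p q = M q p"
    proof (intro allI impI conjI)
      fix p q assume pq: "p < ns!k" "q < ns!k"
      then show "M p q = M q p" using Msym by simp
      then have "cnj (M p q) = M p q" using Mherm[of q p] by simp
      then show "M p q \<in> \<real>" using Reals_cnj_iff by blast
    qed
    have Mspan: "\<forall>q<ns!k. \<exists>x. \<forall>p<ns!k. M p q = (\<Sum>i<s. x i * u i k p)"
    proof (intro allI impI exI[of _ "\<lambda>i. complex_of_real (lam i) * cg ns k B i * cnj (u i k q)" for q])
      fix q p
      show "M p q = (\<Sum>i<s. complex_of_real (lam i) * cg ns k B i * cnj (u i k q) * u i k p)"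
        unfolding M_def Aof_def by (intro sum.cong refl) (simp only: mult_ac)
    qed
    obtain \<mu> w where mw: "\<forall>j<s. \<forall>p<ns!k. w j p \<in> \<real>"
      "\<forall>p<ns!k. \<forall>q<ns!k. M p q = (\<Sum>j<s. complex_of_real (\<mu> j) * w j p * cnj (w j q))"
      using matlem[OF MR Mspan] by blast
    define u' where "u' = (\<lambda>j l. if l = k then w j else V l)"
    have hd': "hdecomp ns H s \<mu> u'"
      unfolding hdecomp_def hrank1_ptens
    proof (intro allI impI)
      fix "is" js assume v: "valid_idx ns is \<and> valid_idx ns js"
      have "H is js = ptens ns ((\<lambda>l. Aof (V l))(k := (\<lambda>p q. \<Sum>j<s. complex_of_real (\<mu> j) * Aof (w j) p q))) is js"
        unfolding H[rule_format, OF v] using v mw(2) V unfolding F_def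
        by (intro ptens_cong) (auto simp: Aof_def mult.assoc)
      also have "\<dots> = (\<Sum>j<s. complex_of_real (\<mu> j) * ptens ns ((\<lambda>l. Aof (V l))(k := Aof (w j))) is js)"
        by (rule ptens_lin[OF k])
      also have "\<dots> = (\<Sum>j<s. complex_of_real (\<mu> j) * ptens ns (\<lambda>l. Aof (u' j l)) is js)"
      proof -
        have "\<And>j. (\<lambda>l. Aof (V l))(k := Aof (w j)) = (\<lambda>l. Aof (u' j l))" unfolding u'_def by (auto simp: fun_eq_iff)
        then show ?thesis by simp
      qed
      finally show "H is js = (\<Sum>j<s. complex_of_real (\<mu> j) * ptens ns (\<lambda>l. Aof (u' j l)) is js)" .
    qed
    have "\<forall>j<s. \<forall>l<length ns. \<forall>p<ns!l. u' j l p \<in> \<real>"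
      unfolding u'_def using mw(1) V by auto
    then show ?thesis using realify[OF hd'] by blast
  qed
qed




lemma sum2: "(\<Sum>i<(2::nat). f i) = f 0 + f 1"
  by (simp add: numeral_2_eq_2)
lemma sum3: "(\<Sum>i<(3::nat). f i) = f 0 + f 1 + f 2"
  by (simp add: numeral_3_eq_3 numeral_2_eq_2)
lemma sum1: "(\<Sum>i<(1::nat). f i) = f 0"
  by simp

definition okt :: "nat list \<Rightarrow> (nat \<Rightarrow> real) \<Rightarrow> (nat \<Rightarrow> nat \<Rightarrow> nat \<Rightarrow> complex) \<Rightarrow> nat \<Rightarrow> bool" where
  "okt ns lam u i \<longleftrightarrow> lam i \<noteq> 0 \<and> (\<forall>l<length ns. nzv (ns!l) (u i l))
      \<and> (\<exists>l<length ns. nzm (ns!l) (Nof (u i l)))"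

definition Fm :: "(nat \<Rightarrow> nat \<Rightarrow> nat \<Rightarrow> complex) \<Rightarrow> nat \<Rightarrow> nat \<Rightarrow> nat \<Rightarrow> nat \<Rightarrow> nat \<Rightarrow> complex" where
  "Fm u i k = (\<lambda>l. Aof (u i l))(k := Nof (u i k))"

lemma Fm_nz:
  assumes "\<forall>l<length ns. nzv (ns!l) (u i l)" "nzm (ns!k) (Nof (u i k))"
  shows "\<forall>l<length ns. nzm (ns!l) (Fm u i k l)"
  using assms unfolding Fm_def by (auto simp: nzm_Aof)

lemma Fm_D:
  assumes "hdecomp ns H r lam u" "SI ns H" "k < length ns"
  shows "\<forall>is js. valid_idx ns is \<and> valid_idx ns js \<longrightarrow> (\<Sum>i<r. complex_of_real (lam i) * ptens ns (Fm u i k) is js) = 0"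
  using hdecomp_D[OF assms] unfolding Fm_def by blast

lemma Fm_zero:
  assumes "k < length ns" "\<forall>p<ns!k. \<forall>q<ns!k. Nof (u i k) p q = 0" "valid_idx ns is" "valid_idx ns js"
  shows "ptens ns (Fm u i k) is js = 0"
  using ptens_mode_zero[of k ns "Fm u i k"] assms unfolding Fm_def by simp

lemma trivial_term:
  assumes "\<not> okt ns lam u i"
  shows "SI ns (\<lambda>is js. complex_of_real (lam i) * hrank1 ns (u i) is js) \<and>
         RR ns (\<lambda>is js. complex_of_real (lam i) * hrank1 ns (u i) is js) 1"
proof (cases "lam i = 0 \<or> \<not> (\<forall>l<length ns. nzv (ns!l) (u i l))")
  case True
  have z: "\<forall>is js. valid_idx ns is \<and> valid_idx ns js \<longrightarrow> complex_of_real (lam i) * hrank1 ns (u i) is js = 0"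
  proof (intro allI impI)
    fix "is" js assume v: "valid_idx ns is \<and> valid_idx ns js"
    show "complex_of_real (lam i) * hrank1 ns (u i) is js = 0"
    proof (cases "lam i = 0")
      case False
      then obtain l where l: "l < length ns" "\<not> nzv (ns!l) (u i l)" using True by blast
      then have "\<forall>p<ns!l. \<forall>q<ns!l. Aof (u i l) p q = 0" unfolding nzv_def Aof_def by auto
      then have "ptens ns (\<lambda>l. Aof (u i l)) is js = 0" using ptens_mode_zero[OF l(1)] v by auto
      then show ?thesis unfolding hrank1_ptens by simp
    qed simp
  qed
  have "SI ns (\<lambda>is js. complex_of_real (lam i) * hrank1 ns (u i) is js)"
    unfolding SI_def
  proof (intro allI impI)
    fix k "is" js assume k: "k < length ns" and v: "valid_idx ns is \<and> valid_idx ns js"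
    have "valid_idx ns (is[k := js ! k])" "valid_idx ns (js[k := is ! k])" using swap_valid k v by auto
    moreover have "complex_of_real (lam i) * hrank1 ns (u i) is js = 0" using z v by blast
    ultimately have "complex_of_real (lam i) * hrank1 ns (u i) (is[k := js ! k]) (js[k := is ! k]) = 0" using z by blast
    then show "complex_of_real (lam i) * hrank1 ns (u i) is js =
          complex_of_real (lam i) * hrank1 ns (u i) (is[k := js ! k]) (js[k := is ! k])"
      using \<open>complex_of_real (lam i) * hrank1 ns (u i) is js = 0\<close> by (simp only:)
  qed
  then show ?thesis using RR_zero[OF z] by blast
next
  case False
  then have "\<forall>l<length ns. \<forall>p<ns!l. \<forall>q<ns!l. Nof (u i l) p q = 0"
    using assms unfolding okt_def nzm_def by blast
  then show ?thesis using SI_scale[OF SI_hrank1] RR_single by blast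
qed

lemma drop_term:
  assumes "hdecomp ns H (Suc r) lam u" "i \<le> r"
  shows "hdecomp ns (\<lambda>is js. H is js - complex_of_real (lam i) * hrank1 ns (u i) is js) r (\<lambda>j. lam (skip i j)) (\<lambda>j. u (skip i j))"
  unfolding hdecomp_def
proof (intro allI impI)
  fix "is" js assume v: "valid_idx ns is \<and> valid_idx ns js"
  define f where "f = (\<lambda>i. complex_of_real (lam i) * hrank1 ns (u i) is js)"
  have "H is js = (\<Sum>i<Suc r. f i)" using assms(1) v unfolding hdecomp_def f_def by blast
  also have "\<dots> = f i + (\<Sum>j<r. f (skip i j))" by (rule sum_skip[OF assms(2)])
  finally show "H is js - complex_of_real (lam i) * hrank1 ns (u i) is js =
      (\<Sum>j<r. complex_of_real (lam (skip i j)) * hrank1 ns (u (skip i j)) is js)"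
    unfolding f_def by simp
qed

lemma reduce:
  assumes si: "SI ns H" and hd: "hdecomp ns H (Suc r) lam u" and i: "i \<le> r" and nok: "\<not> okt ns lam u i"
    and IH: "\<And>H' lam' u'. SI ns H' \<Longrightarrow> hdecomp ns H' r lam' u' \<Longrightarrow> RR ns H' r"
  shows "RR ns H (Suc r)"
proof -
  have tt: "SI ns (\<lambda>is js. complex_of_real (lam i) * hrank1 ns (u i) is js)"
      "RR ns (\<lambda>is js. complex_of_real (lam i) * hrank1 ns (u i) is js) 1"
    using trivial_term[OF nok] by auto
  have "RR ns (\<lambda>is js. H is js - complex_of_real (lam i) * hrank1 ns (u i) is js) r"
    using IH[OF SI_diff[OF si tt(1)] drop_term[OF hd i]] by simp
  from RR_add[OF this tt(2)] have "RR ns H (r+1)" by (rule RR_cong) simp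
  then show ?thesis by simp
qed

lemma main0:
  assumes "hdecomp ns H 0 lam u"
  shows "RR ns H 0"
  using assms unfolding hdecomp_def by (intro RR_zero) simp

lemma main1:
  assumes si: "SI ns H" and hd: "hdecomp ns H 1 lam u"
  shows "RR ns H 1"
proof (cases "okt ns lam u 0")
  case False
  then show ?thesis using reduce[of ns H 0 lam u 0] si hd main0 by simp
next
  case True
  then obtain k where k: "k < length ns" "nzm (ns!k) (Nof (u 0 k))" unfolding okt_def by blast
  have nz: "\<forall>l<length ns. nzm (ns!l) (Fm u 0 k l)" using Fm_nz True k unfolding okt_def by blast
  have "\<forall>is js. valid_idx ns is \<and> valid_idx ns js \<longrightarrow> ptens ns (Fm u 0 k) is js = 0"
    using Fm_D[OF hd si k(1)] True unfolding okt_def by simp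
  then obtain l where "l < length ns" "\<forall>p<ns!l. \<forall>q<ns!l. Fm u 0 k l p q = 0" using ptens_zero by blast
  then show ?thesis using nz unfolding nzm_def by blast
qed

lemma vec_from_prm:
  assumes "prm n (Fm u i k l) (Fm u 0 k l)" "l \<noteq> k" "nzv n (u 0 l)"
  shows "\<exists>\<beta>. \<forall>p<n. u i l p = \<beta> * u 0 l p"
  using prm_vec[of n "u i l" "u 0 l"] assms unfolding Fm_def by simp

lemma main2:
  assumes si: "SI ns H" and hd: "hdecomp ns H 2 lam u"
  shows "RR ns H 2"
proof (cases "okt ns lam u 0 \<and> okt ns lam u 1")
  case False
  then obtain i where "i \<le> 1" "\<not> okt ns lam u i" by (cases "okt ns lam u 0") auto
  then show ?thesis using reduce[of ns H 1 lam u i] si hd main1 by (simp add: numeral_2_eq_2)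
next
  case True
  then obtain k where k: "k < length ns" "nzm (ns!k) (Nof (u 0 k))" unfolding okt_def by blast
  have nz: "\<forall>l<length ns. nzm (ns!l) (Fm u 0 k l)" using Fm_nz True k unfolding okt_def by blast
  have rel: "\<forall>is js. valid_idx ns is \<and> valid_idx ns js \<longrightarrow>
      complex_of_real (lam 0) * ptens ns (Fm u 0 k) is js + complex_of_real (lam 1) * ptens ns (Fm u 1 k) is js = 0"
    using Fm_D[OF hd si k(1)] by (simp add: sum2)
  have "\<forall>l<length ns. prm (ns!l) (Fm u 1 k l) (Fm u 0 k l)"
    using prop2(1)[OF rel _ nz] True unfolding okt_def by simp
  then have "\<forall>i<2. \<forall>l<length ns. l \<noteq> k \<longrightarrow> (\<exists>\<beta>. \<forall>p<ns!l. u i l p = \<beta> * u 0 l p)"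
  proof (intro allI impI)
    fix i l :: nat assume il: "i < 2" "l < length ns" "l \<noteq> k"
    show "\<exists>\<beta>. \<forall>p<ns!l. u i l p = \<beta> * u 0 l p"
    proof (cases "i = 0")
      case True then show ?thesis by (intro exI[of _ 1]) simp
    next
      case False
      then have "i = 1" using il by simp
      then show ?thesis using vec_from_prm[of "ns!l" u i k l] il \<open>\<forall>l<length ns. prm (ns!l) (Fm u 1 k l) (Fm u 0 k l)\<close>
        \<open>okt ns lam u 0 \<and> okt ns lam u 1\<close> unfolding okt_def by blast
    qed
  qed
  then show ?thesis using lcommon[OF si hd k(1)] True unfolding okt_def by blast
qed




lemma w3:
  fixes a0 a1 a2 :: "nat \<Rightarrow> complex"
  assumes rel: "\<forall>p<n. \<forall>q<n. c0 * Aof a0 p q + c1 * Aof a1 p q + c2 * Aof a2 p q = 0"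
    and c: "c0 \<noteq> 0" "c1 \<noteq> 0" "c2 \<noteq> 0" and nz: "nzv n a0" "nzv n a1" "nzv n a2"
  shows "(\<exists>\<beta>. \<forall>p<n. a1 p = \<beta> * a0 p) \<and> (\<exists>\<beta>. \<forall>p<n. a2 p = \<beta> * a0 p)"
proof -
  define F where "F = (\<lambda>(a::nat\<Rightarrow>complex) (l::nat) (p::nat) (q::nat). if l = 0 then a p else cnj (a p))"
  have pt: "ptens [n,n] (F a) is js = Aof a (is!0) (is!1)" for a "is" js
    unfolding ptens_def F_def Aof_def by (simp add: numeral_2_eq_2)
  have vi: "valid_idx [n,n] is \<Longrightarrow> is!0 < n \<and> is!1 < n" for "is"
    unfolding valid_idx_def by auto
  have rel': "\<forall>is js. valid_idx [n,n] is \<and> valid_idx [n,n] js \<longrightarrow>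
      c0 * ptens [n,n] (F a0) is js + c1 * ptens [n,n] (F a1) is js + c2 * ptens [n,n] (F a2) is js = 0"
    unfolding pt using rel vi by blast
  have nzF: "\<forall>l<length [n,n]. nzm ([n,n]!l) (F a l)" if na: "nzv n a" for a
  proof -
    obtain p where "p < n" "a p \<noteq> 0" using na unfolding nzv_def by blast
    then show ?thesis unfolding nzm_def F_def by (auto simp: less_2_cases_iff)
  qed
  obtain k0 where k0: "\<forall>l<length [n,n]. l \<noteq> k0 \<longrightarrow> prm ([n,n]!l) (F a1 l) (F a0 l) \<and> prm ([n,n]!l) (F a2 l) (F a0 l)"
    using prop3[OF rel' c nzF[OF nz(1)] nzF[OF nz(2)] nzF[OF nz(3)]] by blast
  have n0: "0 < n" using nz(1) unfolding nzv_def by auto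
  have conv: "\<exists>\<beta>. \<forall>p<n. b p = \<beta> * a0 p" if "prm n (F b 0) (F a0 0) \<or> prm n (F b 1) (F a0 1)" for b
    using that
  proof
    assume "prm n (F b 0) (F a0 0)"
    then obtain g where "\<forall>p<n. \<forall>q<n. F b 0 p q = g * F a0 0 p q" unfolding prm_def by blast
    then show ?thesis using n0 unfolding F_def by auto
  next
    assume "prm n (F b 1) (F a0 1)"
    then obtain g where g: "\<forall>p<n. \<forall>q<n. F b 1 p q = g * F a0 1 p q" unfolding prm_def by blast
    show ?thesis
    proof (intro exI[of _ "cnj g"] allI impI)
      fix p assume "p < n"
      then have "cnj (b p) = g * cnj (a0 p)" using g n0 unfolding F_def by auto
      then have "cnj (cnj (b p)) = cnj (g * cnj (a0 p))" by simp
      then show "b p = cnj g * a0 p" by simp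
    qed
  qed
  show ?thesis
  proof (cases "k0 = 0")
    case True
    then have "prm n (F a1 1) (F a0 1) \<and> prm n (F a2 1) (F a0 1)" using k0 by auto
    then show ?thesis using conv by blast
  next
    case False
    then have "prm n (F a1 0) (F a0 0) \<and> prm n (F a2 0) (F a0 0)" using k0 by auto
    then show ?thesis using conv by blast
  qed
qed




lemma cg_cnj: "cnj (cg ns k B i) = cg ns k B i"
  using cg_real Reals_cnj_iff by blast

lemma pair:
  assumes si: "SI ns H" and hd: "hdecomp ns H 3 lam u"
    and ok: "okt ns lam u 0" "okt ns lam u 1" "okt ns lam u 2"
    and k: "k < length ns" and cx0: "nzm (ns!k) (Nof (u 0 k))" and cx1: "nzm (ns!k) (Nof (u 1 k))"
    and ncx2: "\<forall>p<ns!k. \<forall>q<ns!k. Nof (u 2 k) p q = 0"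
  shows "RR ns H 3"
proof -
  have nzv0: "\<forall>l<length ns. nzv (ns!l) (u 0 l)" using ok(1) unfolding okt_def by blast
  have nzv2: "\<forall>l<length ns. nzv (ns!l) (u 2 l)" using ok(3) unfolding okt_def by blast
  have lam: "lam 0 \<noteq> 0" "lam 1 \<noteq> 0" "lam 2 \<noteq> 0" using ok unfolding okt_def by auto
  have nz0: "\<forall>l<length ns. nzm (ns!l) (Fm u 0 k l)" using Fm_nz nzv0 cx0 by blast
  have rel: "\<forall>is js. valid_idx ns is \<and> valid_idx ns js \<longrightarrow>
      complex_of_real (lam 0) * ptens ns (Fm u 0 k) is js + complex_of_real (lam 1) * ptens ns (Fm u 1 k) is js = 0"
    using Fm_D[OF hd si k] Fm_zero[where u=u and i=2, OF k ncx2] by (simp add: sum3)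
  have prm1: "\<forall>l<length ns. prm (ns!l) (Fm u 1 k l) (Fm u 0 k l)"
    using prop2(1)[OF rel _ nz0] lam by simp
  have "\<forall>i l. \<exists>\<beta>. i < 2 \<longrightarrow> l < length ns \<longrightarrow> l \<noteq> k \<longrightarrow> (\<forall>p<ns!l. u i l p = \<beta> * u 0 l p)"
  proof (intro allI)
    fix i l :: nat
    show "\<exists>\<beta>. i < 2 \<longrightarrow> l < length ns \<longrightarrow> l \<noteq> k \<longrightarrow> (\<forall>p<ns!l. u i l p = \<beta> * u 0 l p)"
    proof (cases "i = 0")
      case True then show ?thesis by (intro exI[of _ 1]) simp
    next
      case False
      show ?thesis
      proof (cases "i = 1 \<and> l < length ns \<and> l \<noteq> k")
        case True
        then show ?thesis using vec_from_prm[of "ns!l" u 1 k l] prm1 nzv0 by blast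
      next
        case F2: False
        then show ?thesis using False by (intro exI[of _ 0]) auto
      qed
    qed
  qed
  from choice2[OF this] obtain B where B0: "\<forall>i l. i < 2 \<longrightarrow> l < length ns \<longrightarrow> l \<noteq> k \<longrightarrow> (\<forall>p<ns!l. u i l p = B i l * u 0 l p)"
    by blast
  have B: "\<forall>i<2. \<forall>l<length ns. l \<noteq> k \<longrightarrow> (\<forall>p<ns!l. u i l p = B i l * u 0 l p)" using B0 by blast
  define G where "G = (\<lambda>is js. \<Sum>i<2. complex_of_real (lam i) * hrank1 ns (u i) is js)"
  have hdG: "hdecomp ns G 2 lam u" unfolding hdecomp_def G_def by blast
  define M where "M = (\<lambda>p q. \<Sum>i<2. complex_of_real (lam i) * cg ns k B i * Aof (u i k) p q)"
  define F where "F = (\<lambda>l. Aof (u 0 l))(k := M)"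
  have Grep: "\<forall>is js. valid_idx ns is \<and> valid_idx ns js \<longrightarrow> G is js = ptens ns F is js"
    using collapse[OF k hdG B] unfolding F_def M_def by blast
  have Hsplit: "\<forall>is js. valid_idx ns is \<and> valid_idx ns js \<longrightarrow>
      H is js = G is js + complex_of_real (lam 2) * hrank1 ns (u 2) is js"
    using hd unfolding hdecomp_def G_def by (simp add: sum3 sum2)
  have Mherm: "M q p = cnj (M p q)" for p q
    unfolding M_def cnj_sum by (intro sum.cong refl) (simp add: Aof_cnj cg_cnj)
  show ?thesis
  proof (cases "\<exists>l<length ns. l \<noteq> k \<and> nzm (ns!l) (Nof (u 0 l))")
    case True
    then obtain l where l: "l < length ns" "l \<noteq> k" "nzm (ns!l) (Nof (u 0 l))" by blast
    have relD: "\<forall>is js. valid_idx ns is \<and> valid_idx ns js \<longrightarrow>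
        (\<Sum>i<3. complex_of_real (lam i) * ptens ns (Fm u i l) is js) = 0"
      using Fm_D[OF hd si l(1)] .
    have scl: "\<forall>i<2. \<forall>l'<length ns. l' \<noteq> k \<longrightarrow> (\<forall>p<ns!l'. \<forall>q<ns!l'.
        Fm u i l l' p q = complex_of_real ((cmod (B i l'))^2) * Fm u 0 l l' p q)"
    proof (intro allI impI)
      fix i l' p q :: nat assume a: "i < 2" "l' < length ns" "l' \<noteq> k" "p < ns!l'" "q < ns!l'"
      then have bb: "\<And>p. p < ns!l' \<Longrightarrow> u i l' p = B i l' * u 0 l' p" using B by blast
      show "Fm u i l l' p q = complex_of_real ((cmod (B i l'))^2) * Fm u 0 l l' p q"
      proof (cases "l' = l")
        case True
        then show ?thesis unfolding Fm_def using Nof_scale[OF bb a(4,5)] by simp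
      next
        case False
        then show ?thesis unfolding Fm_def using Aof_scale[OF bb a(4,5)] by simp
      qed
    qed
    define F' where "F' = (Fm u 0 l)(k := M)"
    have rel2: "\<forall>is js. valid_idx ns is \<and> valid_idx ns js \<longrightarrow>
        1 * ptens ns F' is js + complex_of_real (lam 2) * ptens ns (Fm u 2 l) is js = 0"
    proof (intro allI impI)
      fix "is" js assume v: "valid_idx ns is \<and> valid_idx ns js"
      have "(\<Sum>i<2. complex_of_real (lam i) * ptens ns (Fm u i l) is js) =
          ptens ns ((Fm u 0 l)(k := (\<lambda>p q. \<Sum>i<2. complex_of_real (lam i) *
             (\<Prod>l'\<in>{..<length ns}-{k}. complex_of_real ((cmod (B i l'))^2)) * Fm u i l k p q))) is js"
        using collapseF[OF k scl, where c="\<lambda>i. complex_of_real (lam i)"] v by blast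
      also have "\<dots> = ptens ns F' is js"
        unfolding F'_def M_def cg_def Fm_def using l(2) by simp
      finally have e: "(\<Sum>i<2. complex_of_real (lam i) * ptens ns (Fm u i l) is js) = ptens ns F' is js" .
      have "(\<Sum>i<3. complex_of_real (lam i) * ptens ns (Fm u i l) is js) = 0" using relD v by blast
      then show "1 * ptens ns F' is js + complex_of_real (lam 2) * ptens ns (Fm u 2 l) is js = 0"
        using e by (simp add: sum3 sum2)
    qed
    show ?thesis
    proof (cases "\<forall>p<ns!k. \<forall>q<ns!k. M p q = 0")
      case True
      have "\<forall>is js. valid_idx ns is \<and> valid_idx ns js \<longrightarrow> G is js = 0"
      proof (intro allI impI)
        fix "is" js assume v: "valid_idx ns is \<and> valid_idx ns js"
        have "ptens ns F is js = 0" using ptens_mode_zero[of k ns F] k True v unfolding F_def by simp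
        then show "G is js = 0" using Grep v by simp
      qed
      then have "hdecomp ns H 1 (\<lambda>_. lam 2) (\<lambda>_. u 2)" using Hsplit unfolding hdecomp_def by simp
      then have "RR ns H 1" using main1[OF si] by blast
      then show ?thesis by (rule RR_mono) simp
    next
      case False
      then have nzM: "nzm (ns!k) M" unfolding nzm_def by blast
      have nzF': "\<forall>l'<length ns. nzm (ns!l') (F' l')"
      proof (intro allI impI)
        fix l' assume l': "l' < length ns"
        show "nzm (ns!l') (F' l')"
          using nzM l l' nzv0 unfolding F'_def Fm_def by (auto simp: nzm_Aof)
      qed
      have "prm (ns!k) (Fm u 2 l k) (F' k)" using prop2(1)[OF rel2 _ nzF'] k by simp
      then obtain \<gamma> where g: "\<forall>p<ns!k. \<forall>q<ns!k. Aof (u 2 k) p q = \<gamma> * M p q"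
        unfolding prm_def F'_def Fm_def using l(2) by auto
      obtain p0 where p0: "p0 < ns!k" "u 2 k p0 \<noteq> 0" using nzv2 k unfolding nzv_def by blast
      have A0: "Aof (u 2 k) p0 p0 \<noteq> 0" "Aof (u 2 k) p0 p0 \<in> \<real>"
        using p0 by (auto simp: Aof_diag_real)
      have gM: "\<gamma> * M p0 p0 \<noteq> 0" using A0 g p0 by metis
      have MR: "M p0 p0 \<in> \<real>" using Mherm[of p0 p0] Reals_cnj_iff by metis
      have gR: "\<gamma> \<in> \<real>"
      proof -
        have "\<gamma> = Aof (u 2 k) p0 p0 / M p0 p0" using g p0 gM by (simp add: field_simps)
        then show ?thesis using A0 MR by (simp add: Reals_divide)
      qed
      define c where "c = Re (1 / \<gamma>)"
      have c: "complex_of_real c = 1 / \<gamma>" unfolding c_def using gR by (simp add: Reals_divide)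
      have Mc: "\<forall>p<ns!k. \<forall>q<ns!k. M p q = complex_of_real c * Aof (u 2 k) p q"
        using g gM c by (auto simp: field_simps)
      define v where "v = (u 0)(k := u 2 k)"
      have Gv: "\<forall>is js. valid_idx ns is \<and> valid_idx ns js \<longrightarrow> G is js = complex_of_real c * hrank1 ns v is js"
      proof (intro allI impI)
        fix "is" js assume vv: "valid_idx ns is \<and> valid_idx ns js"
        have "ptens ns F is js = (\<Prod>l<length ns. if l = k then complex_of_real c else 1) * ptens ns (\<lambda>l. Aof (v l)) is js"
          using Mc vv unfolding F_def v_def by (intro ptens_scale) auto
        also have "(\<Prod>l<length ns. if l = k then complex_of_real c else 1) = complex_of_real c"
          using k by (simp add: prod.delta)
        finally show "G is js = complex_of_real c * hrank1 ns v is js"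
          using Grep vv unfolding hrank1_ptens by simp
      qed
      have "hdecomp ns H 2 (\<lambda>i. if i = 0 then c else lam 2) (\<lambda>i. if i = 0 then v else u 2)"
        unfolding hdecomp_def using Hsplit Gv by (simp add: sum2)
      then have "RR ns H 2" using main2[OF si] by blast
      then show ?thesis by (rule RR_mono) simp
    qed
  next
    case False
    then have sym0: "\<forall>l<length ns. l \<noteq> k \<longrightarrow> (\<forall>p<ns!l. \<forall>q<ns!l. Aof (u 0 l) p q = Aof (u 0 l) q p)"
      unfolding nzm_def Nof_def by auto
    have SIG: "SI ns G"
      unfolding SI_def
    proof (intro allI impI)
      fix k' "is" js assume k': "k' < length ns" and vv: "valid_idx ns is \<and> valid_idx ns js"
      have sv: "valid_idx ns (is[k' := js ! k'])" "valid_idx ns (js[k' := is ! k'])" using swap_valid k' vv by auto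
      show "G is js = G (is[k' := js ! k']) (js[k' := is ! k'])"
      proof (cases "k' = k")
        case True
        have "H is js = H (is[k' := js ! k']) (js[k' := is ! k'])" using si k' vv unfolding SI_def by blast
        moreover have "ptens ns (\<lambda>l. Aof (u 2 l)) is js = ptens ns (\<lambda>l. Aof (u 2 l)) (is[k' := js ! k']) (js[k' := is ! k'])"
          using ncx2 True k' vv unfolding Nof_def by (intro ptens_SI_mode) auto
        ultimately show ?thesis using Hsplit vv sv unfolding hrank1_ptens by (metis add_diff_cancel_right')
      next
        case False
        have "ptens ns F is js = ptens ns F (is[k' := js ! k']) (js[k' := is ! k'])"
          using sym0 False k' vv unfolding F_def by (intro ptens_SI_mode) auto
        then show ?thesis using Grep vv sv by simp
      qed
    qed
    have RG: "RR ns G 2" using main2[OF SIG hdG] .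
    define K where "K = (\<lambda>is js. H is js - G is js)"
    have SIK: "SI ns K" unfolding K_def using SI_diff[OF si SIG] .
    have "hdecomp ns K 1 (\<lambda>_. lam 2) (\<lambda>_. u 2)" using Hsplit unfolding hdecomp_def K_def by simp
    then have RK: "RR ns K 1" using main1[OF SIK] by blast
    have "RR ns (\<lambda>is js. G is js + K is js) (2 + 1)" using RR_add[OF RG RK] .
    then have "RR ns H (2+1)" by (rule RR_cong) (simp add: K_def)
    then show ?thesis by simp
  qed
qed




definition sw12 :: "nat \<Rightarrow> nat" where
  "sw12 i = (if i = 1 then 2 else if i = 2 then 1 else i)"

lemma main3:
  assumes si: "SI ns H" and hd: "hdecomp ns H 3 lam u"
  shows "RR ns H 3"
proof (cases "okt ns lam u 0 \<and> okt ns lam u 1 \<and> okt ns lam u 2")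
  case False
  then obtain i where "i \<le> 2" "\<not> okt ns lam u i"
    by (metis le_refl one_le_numeral zero_le)
  then show ?thesis using reduce[of ns H 2 lam u i] si hd main2 by (simp add: numeral_3_eq_3)
next
  case True
  then have ok: "okt ns lam u 0" "okt ns lam u 1" "okt ns lam u 2" by auto
  then obtain k where k: "k < length ns" "nzm (ns!k) (Nof (u 0 k))" unfolding okt_def by blast
  have nzv: "\<forall>l<length ns. nzv (ns!l) (u i l)" if "i < 3" for i
  proof -
    have "i = 0 \<or> i = 1 \<or> i = 2" using that by auto
    then show ?thesis using ok unfolding okt_def by auto
  qed
  have nzv0: "\<forall>l<length ns. nzv (ns!l) (u 0 l)" using nzv[of 0] by simp
  have lam: "lam 0 \<noteq> 0" "lam 1 \<noteq> 0" "lam 2 \<noteq> 0" using ok unfolding okt_def by auto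
  have nz0: "\<forall>l<length ns. nzm (ns!l) (Fm u 0 k l)" using Fm_nz nzv[of 0] k by simp
  have rel: "\<forall>is js. valid_idx ns is \<and> valid_idx ns js \<longrightarrow>
      complex_of_real (lam 0) * ptens ns (Fm u 0 k) is js + complex_of_real (lam 1) * ptens ns (Fm u 1 k) is js
      + complex_of_real (lam 2) * ptens ns (Fm u 2 k) is js = 0"
    using Fm_D[OF hd si k(1)] by (simp add: sum3)
  show ?thesis
  proof (cases "nzm (ns!k) (Nof (u 1 k))")
    case cx1: True
    show ?thesis
    proof (cases "nzm (ns!k) (Nof (u 2 k))")
      case cx2: True
      have nz1: "\<forall>l<length ns. nzm (ns!l) (Fm u 1 k l)" using Fm_nz nzv[of 1] cx1 by simp
      have nz2: "\<forall>l<length ns. nzm (ns!l) (Fm u 2 k l)" using Fm_nz nzv[of 2] cx2 by simp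
      obtain k0 where k0: "\<forall>l<length ns. l \<noteq> k0 \<longrightarrow> prm (ns!l) (Fm u 1 k l) (Fm u 0 k l) \<and> prm (ns!l) (Fm u 2 k l) (Fm u 0 k l)"
        using prop3[OF rel _ _ _ nz0 nz1 nz2] lam by auto
      have P: "\<forall>i<3. \<forall>l<length ns. l \<noteq> k \<longrightarrow> (\<exists>\<beta>. \<forall>p<ns!l. u i l p = \<beta> * u 0 l p)"
      proof (cases "k0 < length ns \<and> k0 \<noteq> k")
        case False
        show ?thesis
        proof (intro allI impI)
          fix i l :: nat assume il: "i < 3" "l < length ns" "l \<noteq> k"
          then have "l \<noteq> k0" using False by auto
          then have "prm (ns!l) (Fm u i k l) (Fm u 0 k l)"
          proof -
            have "i = 0 \<or> i = 1 \<or> i = 2" using il by auto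
            moreover have "prm (ns!l) (Fm u 0 k l) (Fm u 0 k l)" unfolding prm_def by (intro exI[of _ 1]) simp
            ultimately show ?thesis using k0 il \<open>l \<noteq> k0\<close> by auto
          qed
          then show "\<exists>\<beta>. \<forall>p<ns!l. u i l p = \<beta> * u 0 l p"
            using vec_from_prm[of "ns!l" u i k l] il nzv0 by blast
        qed
      next
        case True
        then have k0m: "k0 < length ns" and k0k: "k0 \<noteq> k" by auto
        have "\<forall>i l. \<exists>g. i < 3 \<longrightarrow> l < length ns \<longrightarrow> l \<noteq> k0 \<longrightarrow> (\<forall>p<ns!l. \<forall>q<ns!l. Fm u i k l p q = g * Fm u 0 k l p q)"
        proof (intro allI)
          fix i l :: nat
          show "\<exists>g. i < 3 \<longrightarrow> l < length ns \<longrightarrow> l \<noteq> k0 \<longrightarrow> (\<forall>p<ns!l. \<forall>q<ns!l. Fm u i k l p q = g * Fm u 0 k l p q)"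
          proof (cases "i = 0")
            case True then show ?thesis by (intro exI[of _ 1]) simp
          next
            case False
            show ?thesis
            proof (cases "(i = 1 \<or> i = 2) \<and> l < length ns \<and> l \<noteq> k0")
              case True then show ?thesis using k0 unfolding prm_def by blast
            next
              case F2: False then show ?thesis using False by (intro exI[of _ 0]) auto
            qed
          qed
        qed
        from choice2[OF this] obtain \<Gamma> where \<Gamma>: "\<forall>i l. i < 3 \<longrightarrow> l < length ns \<longrightarrow> l \<noteq> k0 \<longrightarrow>
            (\<forall>p<ns!l. \<forall>q<ns!l. Fm u i k l p q = \<Gamma> i l * Fm u 0 k l p q)" by blast
        have \<Gamma>': "\<forall>i<3. \<forall>l<length ns. l \<noteq> k0 \<longrightarrow> (\<forall>p<ns!l. \<forall>q<ns!l. Fm u i k l p q = \<Gamma> i l * Fm u 0 k l p q)"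
          using \<Gamma> by blast
        define W where "W = (\<lambda>p q. \<Sum>i<3. complex_of_real (lam i) * (\<Prod>l\<in>{..<length ns}-{k0}. \<Gamma> i l) * Fm u i k k0 p q)"
        have z: "\<forall>is js. valid_idx ns is \<and> valid_idx ns js \<longrightarrow> ptens ns ((Fm u 0 k)(k0 := W)) is js = 0"
        proof (intro allI impI)
          fix "is" js assume v: "valid_idx ns is \<and> valid_idx ns js"
          have "(\<Sum>i<3. complex_of_real (lam i) * ptens ns (Fm u i k) is js) = ptens ns ((Fm u 0 k)(k0 := W)) is js"
            unfolding W_def using collapseF[OF k0m \<Gamma>', where c="\<lambda>i. complex_of_real (lam i)"] v by blast
          moreover have "(\<Sum>i<3. complex_of_real (lam i) * ptens ns (Fm u i k) is js) = 0"
            using Fm_D[OF hd si k(1)] v by blast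
          ultimately show "ptens ns ((Fm u 0 k)(k0 := W)) is js = 0" by simp
        qed
        obtain l' where l': "l' < length ns" "\<forall>p<ns!l'. \<forall>q<ns!l'. ((Fm u 0 k)(k0 := W)) l' p q = 0"
          using ptens_zero[OF z] by blast
        have "l' = k0"
        proof (rule ccontr)
          assume "l' \<noteq> k0"
          then show False using l' nz0 unfolding nzm_def by auto
        qed
        then have W0: "\<forall>p<ns!k0. \<forall>q<ns!k0. W p q = 0" using l' by auto
        have \<Gamma>nz: "(\<Prod>l\<in>{..<length ns}-{k0}. \<Gamma> i l) \<noteq> 0" if i: "i < 3" for i
        proof -
          have "\<Gamma> i l \<noteq> 0" if l: "l \<in> {..<length ns}-{k0}" for l
          proof
            assume g0: "\<Gamma> i l = 0"
            have "i = 0 \<or> i = 1 \<or> i = 2" using i by auto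
            then have nzi: "nzm (ns!l) (Fm u i k l)"
              using l nz0 nz1 nz2 by auto
            have "\<forall>p<ns!l. \<forall>q<ns!l. Fm u i k l p q = \<Gamma> i l * Fm u 0 k l p q" using \<Gamma>' i l by blast
            then have "\<forall>p<ns!l. \<forall>q<ns!l. Fm u i k l p q = 0" using g0 by simp
            then show False using nzi unfolding nzm_def by blast
          qed
          then show ?thesis by (simp add: prod_zero_iff)
        qed
        have w: "\<forall>p<ns!k0. \<forall>q<ns!k0.
            (complex_of_real (lam 0) * (\<Prod>l\<in>{..<length ns}-{k0}. \<Gamma> 0 l)) * Aof (u 0 k0) p q
          + (complex_of_real (lam 1) * (\<Prod>l\<in>{..<length ns}-{k0}. \<Gamma> 1 l)) * Aof (u 1 k0) p q
          + (complex_of_real (lam 2) * (\<Prod>l\<in>{..<length ns}-{k0}. \<Gamma> 2 l)) * Aof (u 2 k0) p q = 0"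
          using W0 k0k unfolding W_def Fm_def by (simp add: sum3)
        have wv: "(\<exists>\<beta>. \<forall>p<ns!k0. u 1 k0 p = \<beta> * u 0 k0 p) \<and> (\<exists>\<beta>. \<forall>p<ns!k0. u 2 k0 p = \<beta> * u 0 k0 p)"
          by (rule w3[OF w]) (use lam \<Gamma>nz nzv k0m in auto)
        show ?thesis
        proof (intro allI impI)
          fix i l :: nat assume il: "i < 3" "l < length ns" "l \<noteq> k"
          show "\<exists>\<beta>. \<forall>p<ns!l. u i l p = \<beta> * u 0 l p"
          proof (cases "i = 0")
            case True then show ?thesis by (intro exI[of _ 1]) simp
          next
            case False
            then have i12: "i = 1 \<or> i = 2" using il by auto
            show ?thesis
            proof (cases "l = k0")
              case True then show ?thesis using wv i12 by blast
            next
              case False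
              then have "prm (ns!l) (Fm u i k l) (Fm u 0 k l)" using k0 i12 il by blast
              then show ?thesis using vec_from_prm[of "ns!l" u i k l] il nzv0 by blast
            qed
          qed
        qed
      qed
      show ?thesis using lcommon[OF si hd k(1) P] nzv0 by simp
    next
      case cx2: False
      then have "\<forall>p<ns!k. \<forall>q<ns!k. Nof (u 2 k) p q = 0" unfolding nzm_def by blast
      then show ?thesis using pair[OF si hd ok k cx1] by blast
    qed
  next
    case cx1: False
    show ?thesis
    proof (cases "nzm (ns!k) (Nof (u 2 k))")
      case cx2: True
      define lam' where "lam' = (\<lambda>i. lam (sw12 i))"
      define u' where "u' = (\<lambda>i. u (sw12 i))"
      have hd': "hdecomp ns H 3 lam' u'"
        using hd unfolding hdecomp_def lam'_def u'_def by (simp add: sum3 sw12_def add_ac)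
      have ok': "okt ns lam' u' 0" "okt ns lam' u' 1" "okt ns lam' u' 2"
        using ok unfolding okt_def lam'_def u'_def sw12_def by auto
      have "\<forall>p<ns!k. \<forall>q<ns!k. Nof (u' 2 k) p q = 0" using cx1 unfolding nzm_def u'_def sw12_def by auto
      moreover have "nzm (ns!k) (Nof (u' 0 k))" "nzm (ns!k) (Nof (u' 1 k))"
        using k cx2 unfolding u'_def sw12_def by auto
      ultimately show ?thesis using pair[OF si hd' ok' k(1)] by blast
    next
      case cx2: False
      have "\<forall>is js. valid_idx ns is \<and> valid_idx ns js \<longrightarrow> ptens ns (Fm u 0 k) is js = 0"
      proof (intro allI impI)
        fix "is" js assume v: "valid_idx ns is \<and> valid_idx ns js"
        have "ptens ns (Fm u 1 k) is js = 0" "ptens ns (Fm u 2 k) is js = 0"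
          using Fm_zero[OF k(1)] cx1 cx2 v unfolding nzm_def by auto
        moreover have "complex_of_real (lam 0) * ptens ns (Fm u 0 k) is js + complex_of_real (lam 1) * ptens ns (Fm u 1 k) is js
          + complex_of_real (lam 2) * ptens ns (Fm u 2 k) is js = 0" using rel v by blast
        ultimately show "ptens ns (Fm u 0 k) is js = 0" using lam by simp
      qed
      then obtain l where "l < length ns" "\<forall>p<ns!l. \<forall>q<ns!l. Fm u 0 k l p q = 0" using ptens_zero by blast
      then show ?thesis using nz0 unfolding nzm_def by blast
    qed
  qed
qed




lemma RD_SI:
  assumes "real_vectors u" "hdecomp ns H r lam u"
  shows "SI ns H"
  unfolding SI_def
proof (intro allI impI)
  fix k "is" js assume k: "k < length ns" and v: "valid_idx ns is \<and> valid_idx ns js"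
  have sv: "valid_idx ns (is[k := js ! k])" "valid_idx ns (js[k := is ! k])" using swap_valid k v by auto
  have t: "hrank1 ns (u i) is js = hrank1 ns (u i) (is[k := js ! k]) (js[k := is ! k])" for i
  proof -
    have "SI ns (hrank1 ns (u i))"
      using assms(1) by (intro SI_hrank1) (auto simp: Nof_real real_vectors_def)
    then show ?thesis using k v unfolding SI_def by blast
  qed
  show "H is js = H (is[k := js ! k]) (js[k := is ! k])"
    using assms(2) v sv t unfolding hdecomp_def by simp
qed

lemma RR_le3:
  assumes "SI ns H" "hdecomp ns H h lam u" "h \<le> 3"
  shows "RR ns H h"
proof -
  have "h = 0 \<or> h = 1 \<or> h = 2 \<or> h = 3" using assms(3) by auto
  then show ?thesis using main0 main1 main2 main3 assms(1,2) by auto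
qed

theorem proposition3p7:
  fixes ns :: "nat list" and H :: "nat list \<Rightarrow> nat list \<Rightarrow> complex"
  assumes "ns \<noteq> []" and "\<forall>n\<in>set ns. n > 0"
    and "H \<in> RD ns"
  shows "(hrank ns H \<le> 3 \<longrightarrow> hrank ns H = hrank_real ns H)
       \<and> (hrank_real ns H \<le> 4 \<longrightarrow> hrank ns H = hrank_real ns H)"
proof -
  obtain r0 lam0 u0 where R: "real_vectors u0" "hdecomp ns H r0 lam0 u0"
    using assms(3) unfolding RD_def by blast
  have si: "SI ns H" using RD_SI[OF R] .
  have ex: "\<exists>r lam u. hdecomp ns H r lam u" using R by blast
  have exr: "\<exists>r lam u. real_vectors u \<and> hdecomp ns H r lam u" using R by blast
  obtain lam u where hd: "hdecomp ns H (hrank ns H) lam u"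
    using LeastI_ex[OF ex] unfolding hrank_def by blast
  obtain lamr ur where hdr: "real_vectors ur" "hdecomp ns H (hrank_real ns H) lamr ur"
    using LeastI_ex[OF exr] unfolding hrank_real_def by blast
  have le: "hrank ns H \<le> hrank_real ns H"
    unfolding hrank_def using hdr(2) by (intro Least_le) blast
  have p1: "hrank ns H = hrank_real ns H" if h3: "hrank ns H \<le> 3"
  proof -
    have "RR ns H (hrank ns H)" using RR_le3[OF si hd h3] .
    then have "hrank_real ns H \<le> hrank ns H"
      unfolding hrank_real_def RR_def by (intro Least_le) blast
    then show ?thesis using le by simp
  qed
  have p2: "hrank ns H = hrank_real ns H" if "hrank_real ns H \<le> 4"
  proof (cases "hrank ns H \<le> 3")
    case True then show ?thesis using p1 by blast
  next
    case False then show ?thesis using le that by simp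
  qed
  show ?thesis using p1 p2 by blast
qed


end
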